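(* Let $\alpha,\beta>0$, let $g(n)=\sum_{i=0}^k c_in^i$ be a polynomial of degree $k\ge1$ (so $c_k\ne0$), and let $x$ be a sequence (with given $x(1)$) satisfying \[x(n)=\alpha\,x(\lfloor n/2\rfloor)+\beta\,x(\lceil n/2\rceil)+g(n)\qquad(n\ge2).\] Let $d_0\coloneqq(1-\beta)x(1)-g(1)+g(0)$ and $d_1\coloneqq g(1)-(1-\beta)x(1)$. Then, as $n\to\infty$, with suitable $1$-periodic continuous functions $\Phi$ and $\Psi$: (1a) If $\alpha+\beta>2^k$ and $2^k>\max\{\alpha,\beta\}$, then $x(n)=n^{\log_2(\alpha+\beta)}\Phi(\{\log_2n\})+n^k\Psi(\{\log_2n\})+O(n^{\log_2\max\{\alpha,\beta\}})$. (1b) If $\alpha+\beta>2^k$ and $\max\{\alpha,\beta\}\ge2^k$, then $x(n)=n^{\log_2(\alpha+\beta)}\Phi(\{\log_2n\})+O\big(n^{\log_2\max\{\alpha,\beta\}}(\log n)^{[\max\{\alpha,\beta\}=2^k]}\big)$. (2) If $\alpha+\beta=2^k$, then for every $\varepsilon>0$, $x(n)=n^k(\log n)\Phi(\{\log_2n\})+n^k\Psi(\{\log_2n\})+O\big(n^{\log_2\max\{\alpha,\beta\}+[\alpha=\beta]\varepsilon}\big)$. (3) If $2^k>\alpha+\beta>2^{k-1}$, then for every $\varepsilon>0$, $x(n)=n^k\Phi(\{\log_2n\})+n^{\log_2(\alpha+\beta)}\Psi(\{\log_2n\})+O\big(n^{\log_2\max\{\alpha,\beta,2^{k-1}\}+[\max\{\alpha,\beta\}=2^{k-1}]\varepsilon}(\log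 n)^{[\max\{\alpha,\beta\}<2^{k-1}]}\big)$. (4) If $2^{k-1}\ge\alpha+\beta$, then $x(n)=n^k\Phi(\{\log_2n\})+O(n^{k-1}(\log n)^E)$, where $E\coloneqq1+[\alpha+\beta=2^{k-1}]\big([k\ge2\text{ and }c_{k-1}\ne0]+[k=1\text{ and }d_0+d_1\ne0]\big)$.
   Context: $\{z\}=z-\lfloor z\rfloor$ denotes the fractional part of a real number $z$. Iverson's bracket: $[S]=1$ if the statement $S$ is true and $0$ otherwise. The values $g(0),g(1)$ are the values of the polynomial $g$ (they do not enter the recurrence). *)

theory Defs
  imports "HOL-Analysis.Analysis" "HOL-Computational_Algebra.Polynomial"
    "HOL-Library.Landau_Symbols"
begin

definition iverson :: "bool \<Rightarrow> 'a::{zero,one}" where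
  "iverson S = (if S then 1 else 0)"

definition periodic1_cont :: "(real \<Rightarrow> real) \<Rightarrow> bool" where
  "periodic1_cont \<Phi> \<longleftrightarrow> continuous_on UNIV \<Phi> \<and> (\<forall>t. \<Phi> (t + 1) = \<Phi> t)"

end

theory Submission
  imports Defs
begin

lemma floor_rec_bound:
  fixes f :: "nat \<Rightarrow> real" and a C r :: real
  assumes a0: "a \<ge> 0" and C0: "C \<ge> 0" and r0: "r \<ge> 0" and ar: "a < 2 powr r"
    and rec: "\<forall>n\<ge>2. \<bar>f n\<bar> \<le> a * \<bar>f (n div 2)\<bar> + C * real n powr r"
  shows "\<exists>K. \<forall>n\<ge>1. \<bar>f n\<bar> \<le> K * real n powr r"
proof -
  define K where "K = max \<bar>f 1\<bar> (C / (1 - a / 2 powr r))"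
  have tp: "2 powr r > 0" by simp
  have q: "a / 2 powr r < 1" using ar tp by simp
  have K1: "C \<le> K * (1 - a / 2 powr r)"
  proof -
    have "C = (C / (1 - a / 2 powr r)) * (1 - a / 2 powr r)" using q by simp
    also have "\<dots> \<le> K * (1 - a / 2 powr r)" unfolding K_def
      by (rule mult_right_mono) (use q in auto)
    finally show ?thesis .
  qed
  have K0: "K \<ge> 0" unfolding K_def by simp
  have "\<forall>n. n \<ge> 1 \<longrightarrow> \<bar>f n\<bar> \<le> K * real n powr r"
  proof (intro allI impI)
   fix n :: nat assume "n \<ge> 1"
   then show "\<bar>f n\<bar> \<le> K * real n powr r"
   proof (induction n rule: less_induct)
    case (less n)
    have IH: "\<forall>m<n. m \<ge> 1 \<longrightarrow> \<bar>f m\<bar> \<le> K * real m powr r" using less by auto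
    have n1: "n \<ge> 1" using less by auto
    show "\<bar>f n\<bar> \<le> K * real n powr r"
    proof (cases "n = 1")
      case True then show ?thesis unfolding K_def by simp
    next
      case False
      then have n2: "n \<ge> 2" using n1 by simp
      have m1: "n div 2 \<ge> 1" "n div 2 < n" using n2 by auto
      have h1: "\<bar>f (n div 2)\<bar> \<le> K * real (n div 2) powr r" using IH m1 by auto
      have "real (n div 2) \<le> real n / 2" by linarith
      then have h2: "real (n div 2) powr r \<le> (real n / 2) powr r"
        using m1 r0 by (intro powr_mono2) auto
      have h3: "(real n / 2) powr r = real n powr r / 2 powr r"
        by (simp add: powr_divide)
      have "\<bar>f n\<bar> \<le> a * \<bar>f (n div 2)\<bar> + C * real n powr r" using rec n2 by auto
      also have "\<dots> \<le> a * (K * (real n powr r / 2 powr r)) + C * real n powr r"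
      proof -
        have "\<bar>f (n div 2)\<bar> \<le> K * (real n powr r / 2 powr r)"
          using h1 mult_left_mono[OF h2 K0] h3 by simp
        then show ?thesis using a0 by (intro add_right_mono mult_left_mono) auto
      qed
      also have "\<dots> = real n powr r * (K * (a / 2 powr r) + C)" by (simp add: algebra_simps)
      also have "\<dots> \<le> real n powr r * K" using K1
        by (intro mult_left_mono) (auto simp: algebra_simps)
      finally show ?thesis by (simp add: mult.commute)
    qed
   qed
  qed
  then show ?thesis by blast
qed

lemma floor_rec_bound_log:
  fixes f :: "nat \<Rightarrow> real" and a C q :: real
  assumes a0: "a \<ge> 0" and C0: "C \<ge> 0" and q0: "q \<ge> 0" and aq: "a \<le> 2 powr q"
    and rec: "\<forall>n\<ge>2. \<bar>f n\<bar> \<le> a * \<bar>f (n div 2)\<bar> + C * real n powr q"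
  shows "\<exists>K. \<forall>n\<ge>1. \<bar>f n\<bar> \<le> K * real n powr q * (log 2 (real n) + 1)"
proof -
  define K where "K = max \<bar>f 1\<bar> C"
  have K0: "K \<ge> 0" unfolding K_def by simp
  have "\<forall>n. n \<ge> 1 \<longrightarrow> \<bar>f n\<bar> \<le> K * real n powr q * (log 2 (real n) + 1)"
  proof (intro allI impI)
   fix n :: nat assume "n \<ge> 1"
   then show "\<bar>f n\<bar> \<le> K * real n powr q * (log 2 (real n) + 1)"
   proof (induction n rule: less_induct)
    case (less n)
    have IH: "\<forall>m<n. m \<ge> 1 \<longrightarrow> \<bar>f m\<bar> \<le> K * real m powr q * (log 2 (real m) + 1)" using less by auto
    have n1: "n \<ge> 1" using less by auto
    show "\<bar>f n\<bar> \<le> K * real n powr q * (log 2 (real n) + 1)"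
    proof (cases "n = 1")
      case True then show ?thesis unfolding K_def by simp
    next
      case False
      then have n2: "n \<ge> 2" using n1 by simp
      have m1: "n div 2 \<ge> 1" "n div 2 < n" using n2 by auto
      define m where "m = n div 2"
      have h1: "\<bar>f m\<bar> \<le> K * real m powr q * (log 2 (real m) + 1)" using IH m1 unfolding m_def by auto
      have mle: "real m \<le> real n / 2" unfolding m_def by linarith
      have mpos: "real m \<ge> 1" using m1 unfolding m_def by simp
      then have h2: "real m powr q \<le> (real n / 2) powr q"
        using mle q0 by (intro powr_mono2) auto
      have h3: "(real n / 2) powr q = real n powr q / 2 powr q"
        by (simp add: powr_divide)
      have lg: "log 2 (real m) \<le> log 2 (real n) - 1"
      proof -
        have "log 2 (real m) \<le> log 2 (real n / 2)" using mle mpos by simp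
        also have "\<dots> = log 2 (real n) - 1" using n2 by (simp add: log_divide)
        finally show ?thesis .
      qed
      have lg0: "log 2 (real m) \<ge> 0" using mpos by simp
      have "a * real m powr q \<le> 2 powr q * (real n powr q / 2 powr q)"
        using h2 h3 a0 aq by (intro mult_mono) auto
      then have am: "a * real m powr q \<le> real n powr q" by simp
      have "\<bar>f n\<bar> \<le> a * \<bar>f m\<bar> + C * real n powr q" using rec n2 unfolding m_def by auto
      also have "\<dots> \<le> a * (K * real m powr q * (log 2 (real m) + 1)) + C * real n powr q"
        using h1 a0 by (intro add_right_mono mult_left_mono) auto
      also have "\<dots> = K * (log 2 (real m) + 1) * (a * real m powr q) + C * real n powr q"
        by (simp add: algebra_simps)
      also have "\<dots> \<le> K * (log 2 (real n)) * real n powr q + K * real n powr q"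
      proof (intro add_mono)
        have "K * (log 2 (real m) + 1) * (a * real m powr q) \<le> K * (log 2 (real m) + 1) * real n powr q"
          using am K0 lg0 by (intro mult_left_mono) auto
        also have "\<dots> \<le> K * (log 2 (real n)) * real n powr q"
          using lg K0 by (intro mult_right_mono mult_left_mono) auto
        finally show "K * (log 2 (real m) + 1) * (a * real m powr q) \<le> K * (log 2 (real n)) * real n powr q" .
        show "C * real n powr q \<le> K * real n powr q" unfolding K_def by (intro mult_right_mono) auto
      qed
      also have "\<dots> = K * real n powr q * (log 2 (real n) + 1)" by (simp add: algebra_simps)
      finally show ?thesis .
    qed
   qed
  qed
  then show ?thesis by blast
qed

lemma geom_cauchy:
  fixes a :: "nat \<Rightarrow> real"
  assumes t0: "0 \<le> \<theta>" and t1: "\<theta> < 1" and K0: "K \<ge> 0"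
    and st: "\<forall>j\<ge>J. \<bar>a (Suc j) - a j\<bar> \<le> K * \<theta>^j"
  shows "convergent a \<and> (\<forall>j\<ge>J. \<bar>lim a - a j\<bar> \<le> K * \<theta>^j / (1-\<theta>))"
proof -
  have tel: "\<bar>a m - a j\<bar> \<le> K * (\<theta>^j - \<theta>^m) / (1-\<theta>)" if "J \<le> j" "j \<le> m" for j m
    using that(2)
  proof (induct m rule: dec_induct)
    case base then show ?case by simp
  next
    case (step m)
    have "\<bar>a (Suc m) - a j\<bar> \<le> \<bar>a m - a j\<bar> + \<bar>a (Suc m) - a m\<bar>" by linarith
    also have "\<dots> \<le> K * (\<theta>^j - \<theta>^m) / (1-\<theta>) + K * \<theta>^m"
      using step st that(1) by (intro add_mono) auto
    also have "\<dots> = K * (\<theta>^j - \<theta>^Suc m) / (1-\<theta>)" using t1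
      by (simp add: field_simps)
    finally show ?case .
  qed
  have tel2: "\<bar>a m - a j\<bar> \<le> K * \<theta>^j / (1-\<theta>)" if "J \<le> j" "j \<le> m" for j m
  proof -
    have "K * (\<theta>^j - \<theta>^m) / (1-\<theta>) \<le> K * \<theta>^j / (1-\<theta>)"
      using t0 t1 K0 by (intro divide_right_mono mult_left_mono) auto
    then show ?thesis using tel[OF that] by linarith
  qed
  have "Cauchy a"
  proof (rule CauchyI)
    fix e :: real assume e: "e > 0"
    have "(\<lambda>j. 2 * (K * \<theta>^j / (1-\<theta>))) \<longlonglongrightarrow> 2 * (K * 0 / (1-\<theta>))"
      using t0 t1 by (intro tendsto_intros LIMSEQ_power_zero) auto
    then have "eventually (\<lambda>j. 2 * (K * \<theta>^j / (1-\<theta>)) < e) sequentially"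
      using e by (auto simp: order_tendsto_iff)
    then obtain M where M: "\<forall>j\<ge>M. 2 * (K * \<theta>^j / (1-\<theta>)) < e" by (auto simp: eventually_sequentially)
    show "\<exists>M. \<forall>m\<ge>M. \<forall>n\<ge>M. norm (a m - a n) < e"
    proof (intro exI[of _ "max M J"] allI impI)
      fix m n assume "max M J \<le> m" "max M J \<le> n"
      then have "\<bar>a m - a (max M J)\<bar> \<le> K * \<theta>^(max M J) / (1-\<theta>)"
                "\<bar>a n - a (max M J)\<bar> \<le> K * \<theta>^(max M J) / (1-\<theta>)"
        by (auto intro!: tel2)
      moreover have "2 * (K * \<theta>^(max M J) / (1-\<theta>)) < e" using M by auto
      ultimately show "norm (a m - a n) < e" unfolding real_norm_def by arith
    qed
  qed
  then have c: "convergent a" by (simp add: Cauchy_convergent_iff)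
  then have l: "a \<longlonglongrightarrow> lim a" by (simp add: convergent_LIMSEQ_iff)
  have "\<bar>lim a - a j\<bar> \<le> K * \<theta>^j / (1-\<theta>)" if "j \<ge> J" for j
  proof (rule LIMSEQ_le_const2)
    show "(\<lambda>m. \<bar>a m - a j\<bar>) \<longlonglongrightarrow> \<bar>lim a - a j\<bar>" by (intro tendsto_intros l)
    show "\<exists>N. \<forall>n\<ge>N. \<bar>a n - a j\<bar> \<le> K * \<theta> ^ j / (1 - \<theta>)" using tel2 that by blast
  qed
  with c show ?thesis by blast
qed

lemma mvt_abs:
  fixes f f' :: "real \<Rightarrow> real"
  assumes der: "\<And>t. a \<le> t \<Longrightarrow> t \<le> b \<Longrightarrow> (f has_real_derivative f' t) (at t)"
    and bd: "\<And>t. a \<le> t \<Longrightarrow> t \<le> b \<Longrightarrow> \<bar>f' t\<bar> \<le> B"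
    and uv: "a \<le> u" "u \<le> b" "a \<le> v" "v \<le> b"
  shows "\<bar>f u - f v\<bar> \<le> B * \<bar>u - v\<bar>"
proof -
  have gen: "\<bar>f y - f x\<bar> \<le> B * (y - x)" if "a \<le> x" "x < y" "y \<le> b" for x y
  proof -
    have "\<exists>w. x < w \<and> w < y \<and> f y - f x = (y - x) * f' w"
      by (rule MVT2[OF \<open>x < y\<close>]) (use der that in auto)
    then obtain w where w: "x < w" "w < y" "f y - f x = (y - x) * f' w" by blast
    have "\<bar>f y - f x\<bar> = (y - x) * \<bar>f' w\<bar>" using w by (simp add: abs_mult)
    also have "\<dots> \<le> (y - x) * B" using bd[of w] w that by (intro mult_left_mono) auto
    finally show ?thesis by (simp add: mult.commute)
  qed
  consider "u < v" | "u = v" | "v < u" by linarith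
  then show ?thesis
  proof cases
    case 1 then show ?thesis using gen[of u v] uv by (simp add: abs_minus_commute)
  next
    case 2 then show ?thesis using bd[of u] uv by (auto intro: order.trans[OF abs_ge_zero])
  next
    case 3 then show ?thesis using gen[of v u] uv by simp
  qed
qed

lemma delta_bound:
  fixes z hh :: "nat \<Rightarrow> real" and \<alpha> \<beta> C q r :: real
  assumes ab: "\<alpha> > 0" "\<beta> > 0"
    and zeven: "\<forall>m\<ge>1. z (2*m) = (\<alpha>+\<beta>) * z m"
    and zodd: "\<forall>m\<ge>1. z (2*m+1) = \<alpha> * z m + \<beta> * z (m+1) + hh m"
    and hb: "\<forall>m\<ge>1. \<bar>hh m\<bar> \<le> C * real (m+1) powr q"
    and C0: "C \<ge> 0" and q0: "q \<ge> 0" and qr: "q \<le> r" and mr: "max \<alpha> \<beta> < 2 powr r"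
  shows "\<exists>K. \<forall>n\<ge>1. \<bar>z (n+1) - z n\<bar> \<le> K * real n powr r"
proof (rule floor_rec_bound[where a="max \<alpha> \<beta>" and C=C])
  show "0 \<le> max \<alpha> \<beta>" using ab by simp
  show "0 \<le> C" "0 \<le> r" "max \<alpha> \<beta> < 2 powr r" using C0 q0 qr mr by auto
  show "\<forall>n\<ge>2. \<bar>z (n + 1) - z n\<bar> \<le> max \<alpha> \<beta> * \<bar>z (n div 2 + 1) - z (n div 2)\<bar> + C * real n powr r"
  proof (intro allI impI)
    fix n :: nat assume n2: "n \<ge> 2"
    define m where "m = n div 2"
    have m1: "m \<ge> 1" using n2 unfolding m_def by auto
    have hm: "\<bar>hh m\<bar> \<le> C * real n powr r"
    proof -
      have "real (m+1) \<le> real n" using n2 unfolding m_def by linarith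
      then have "real (m+1) powr q \<le> real n powr r"
      proof -
        have "real (m+1) powr q \<le> real n powr q" using \<open>real (m+1) \<le> real n\<close> q0 by (intro powr_mono2) auto
        also have "\<dots> \<le> real n powr r" using qr n2 by (intro powr_mono) auto
        finally show ?thesis .
      qed
      then show ?thesis using hb m1 C0 by (meson mult_left_mono order.trans)
    qed
    have d: "\<bar>z m - z (m+1)\<bar> = \<bar>z (m+1) - z m\<bar>" by (simp add: abs_minus_commute)
    consider "n = 2*m" | "n = 2*m+1" unfolding m_def by linarith
    then show "\<bar>z (n + 1) - z n\<bar> \<le> max \<alpha> \<beta> * \<bar>z (n div 2 + 1) - z (n div 2)\<bar> + C * real n powr r"
    proof cases
      case 1
      have "z (n+1) - z n = \<beta> * (z (m+1) - z m) + hh m"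
        using zodd zeven m1 1 by (simp add: algebra_simps)
      then have "\<bar>z (n+1) - z n\<bar> \<le> \<beta> * \<bar>z (m+1) - z m\<bar> + \<bar>hh m\<bar>"
        using ab by (simp add: abs_mult) (metis abs_of_pos abs_triangle_ineq abs_mult ab(2))
      also have "\<dots> \<le> max \<alpha> \<beta> * \<bar>z (m+1) - z m\<bar> + C * real n powr r"
        using hm by (intro add_mono mult_right_mono) auto
      finally show ?thesis unfolding m_def by simp
    next
      case 2
      have e: "z (2*m+2) = (\<alpha>+\<beta>) * z (m+1)" using zeven[rule_format, of "m+1"] by (simp add: algebra_simps)
      have "z (n+1) - z n = \<alpha> * (z (m+1) - z m) - hh m"
        using zodd m1 2 e by (simp add: algebra_simps)
      then have "\<bar>z (n+1) - z n\<bar> \<le> \<alpha> * \<bar>z (m+1) - z m\<bar> + \<bar>hh m\<bar>"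
        using ab by (metis abs_of_pos abs_triangle_ineq4 abs_mult)
      also have "\<dots> \<le> max \<alpha> \<beta> * \<bar>z (m+1) - z m\<bar> + C * real n powr r"
        using hm by (intro add_mono mult_right_mono) auto
      finally show ?thesis unfolding m_def using 2 by simp
    qed
  qed
qed

lemma pw_lemma: "(y * 2^j) powr r / s^j = y powr r * (2 powr r / s)^j" if "y > 0" for y r s :: real
  using that by (simp add: powr_mult powr_realpow[symmetric] powr_powr power_divide mult.commute)

lemma floor_props:
  fixes u :: real assumes "1 \<le> u"
  shows "nat \<lfloor>u\<rfloor> \<ge> 1" "real (nat \<lfloor>u\<rfloor>) \<le> u" "u < real (nat \<lfloor>u\<rfloor>) + 1"
  using assms by linarith+

lemma core:
  fixes z hh :: "nat \<Rightarrow> real" and \<alpha> \<beta> C q :: real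
  assumes ab: "\<alpha> > 0" "\<beta> > 0"
    and zeven: "\<forall>m\<ge>1. z (2*m) = (\<alpha>+\<beta>) * z m"
    and zodd: "\<forall>m\<ge>1. z (2*m+1) = \<alpha> * z m + \<beta> * z (m+1) + hh m"
    and hb: "\<forall>m\<ge>1. \<bar>hh m\<bar> \<le> C * real (m+1) powr q"
    and C0: "C \<ge> 0" and q0: "q \<ge> 0" and qs: "2 powr q < \<alpha> + \<beta>"
  shows "\<exists>\<Phi>. periodic1_cont \<Phi> \<and> (\<forall>n\<ge>1. z n = real n powr log 2 (\<alpha>+\<beta>) * \<Phi> (frac (log 2 (real n))))"
proof -
  define s where "s = \<alpha> + \<beta>"
  define p where "p = log 2 s"
  define \<mu> where "\<mu> = max \<alpha> \<beta>"
  have s0: "s > 0" and mu0: "\<mu> > 0" and mus: "\<mu> < s" using ab unfolding s_def \<mu>_def by auto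
  have sp: "2 powr p = s" unfolding p_def using s0 by simp
  have lmp: "log 2 \<mu> < p" unfolding p_def using mu0 mus s0 by simp
  have qp: "q < p" unfolding p_def using qs s0 s_def by (simp add: less_log_iff)
  define r where "r = max q ((log 2 \<mu> + p)/2)"
  have qr: "q \<le> r" and rp: "r < p" and lr: "log 2 \<mu> < r" using lmp qp unfolding r_def max_def by auto
  have mur: "\<mu> < 2 powr r"
  proof -
    have "\<mu> = 2 powr (log 2 \<mu>)" using mu0 by simp
    also have "\<dots> < 2 powr r" using lr by simp
    finally show ?thesis .
  qed
  have r0: "r \<ge> 0" using qr q0 by simp
  obtain K0 where K0: "\<forall>n\<ge>1. \<bar>z (n+1) - z n\<bar> \<le> K0 * real n powr r"
    using delta_bound[OF ab zeven zodd hb C0 q0 qr] mur unfolding \<mu>_def by blast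
  have K00: "K0 \<ge> 0" using K0[rule_format, of 1] by (auto intro: order.trans[OF abs_ge_zero])
  define \<theta> where "\<theta> = 2 powr r / s"
  have th0: "\<theta> > 0" unfolding \<theta>_def using s0 by simp
  have th1: "\<theta> < 1" unfolding \<theta>_def using s0 rp sp by (metis divide_less_eq_1_pos powr_less_mono one_less_numeral_iff semiring_norm(76))
  define a :: "nat \<Rightarrow> real \<Rightarrow> real" where "a j y = z (nat \<lfloor>y * 2^j\<rfloor>) / s^j" for j y
  define A where "A y = lim (\<lambda>j. a j y)" for y
  have dz: "\<bar>z (N+1) - z N\<bar> \<le> K0 * (v * 2^j) powr r" if "N \<ge> 1" "real N \<le> v * 2^j" for N v j
  proof -
    have "\<bar>z (N+1) - z N\<bar> \<le> K0 * real N powr r" using K0 that by auto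
    also have "\<dots> \<le> K0 * (v * 2^j) powr r" using that K00 r0 by (intro mult_left_mono powr_mono2) auto
    finally show ?thesis .
  qed
  have step: "\<bar>a (Suc j) y - a j y\<bar> \<le> (K0 * y powr r * \<theta>) * \<theta>^j" if y0: "y > 0" and yj: "1 \<le> y * 2^j" for y j
  proof -
    define u where "u = y * 2^j"
    define N where "N = nat \<lfloor>u\<rfloor>"
    define M where "M = nat \<lfloor>y * 2^Suc j\<rfloor>"
    have u2: "y * 2^Suc j = 2 * u" unfolding u_def by simp
    have N1: "N \<ge> 1" "real N \<le> u" using floor_props[of u] yj unfolding N_def u_def by auto
    have MN: "M = 2*N \<or> M = 2*N+1" unfolding M_def N_def u2 using yj u_def by linarith
    have rhs0: "0 \<le> (K0 * y powr r * \<theta>) * \<theta>^j" using K00 th0 by simp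
    show ?thesis
    proof (cases "M = 2*N")
      case True
      have "a (Suc j) y = a j y" unfolding a_def M_def[symmetric] N_def[symmetric] u_def[symmetric] True
        using zeven N1 s0 by (simp add: s_def[symmetric])
      then show ?thesis using rhs0 by simp
    next
      case False
      then have M: "M = 2*N+1" using MN by simp
      have "a (Suc j) y - a j y = (z (2*N+1) - z (2*N)) / s^Suc j"
        unfolding a_def M_def[symmetric] N_def[symmetric] u_def[symmetric] M
        using zeven N1 s0 by (simp add: field_simps s_def[symmetric])
      then have "\<bar>a (Suc j) y - a j y\<bar> = \<bar>z (2*N+1) - z (2*N)\<bar> / s^Suc j"
        using s0 by simp
      also have "\<dots> \<le> K0 * (y * 2^Suc j) powr r / s^Suc j"
        using dz[of "2*N" y "Suc j"] N1 u2 s0 by (intro divide_right_mono) auto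
      also have "\<dots> = K0 * (y powr r * \<theta>^Suc j)" unfolding \<theta>_def
        using pw_lemma[OF y0, of "Suc j" r s] by (metis times_divide_eq_right)
      finally show ?thesis by (simp add: mult_ac)
    qed
  qed
  have conv: "convergent (\<lambda>i. a i y) \<and> \<bar>A y - a j y\<bar> \<le> K0 * y powr r * \<theta> * \<theta>^j / (1-\<theta>)"
    if y0: "y > 0" and yj: "1 \<le> y * 2^j" for y j
  proof -
    have "\<forall>i\<ge>j. \<bar>a (Suc i) y - a i y\<bar> \<le> (K0 * y powr r * \<theta>) * \<theta>^i"
    proof (intro allI impI step[OF y0])
      fix i assume "j \<le> i"
      then have "(2::real)^j \<le> 2^i" by simp
      then show "1 \<le> y * 2^i" using yj y0 by (meson order.trans mult_left_mono less_imp_le)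
    qed
    from geom_cauchy[OF less_imp_le[OF th0] th1 _ this] K00 th0
    show ?thesis unfolding A_def by auto
  qed
  have exJ: "\<exists>j. 1 \<le> y * 2^j" if "y > 0" for y :: real
  proof -
    obtain j where "1/y < 2^j" using real_arch_pow[of 2 "1/y"] by auto
    then show ?thesis using that by (auto simp: field_simps intro!: exI[of _ j])
  qed
  have lim: "(\<lambda>i. a i y) \<longlonglongrightarrow> A y" if "y > 0" for y
    using conv[OF that] exJ[OF that] unfolding A_def by (auto simp: convergent_LIMSEQ_iff)
  have A2: "A (2*y) = s * A y" if "y > 0" for y
  proof -
    have "(\<lambda>j. a j (2*y)) = (\<lambda>j. s * a (Suc j) y)" unfolding a_def using s0
      by (auto simp: mult_ac)
    moreover have "(\<lambda>j. s * a (Suc j) y) \<longlonglongrightarrow> s * A y"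
      by (intro tendsto_mult_left) (use lim[OF that] LIMSEQ_Suc in blast)
    ultimately show ?thesis unfolding A_def[of "2*y"] by (simp add: limI)
  qed
  have zpow: "z (n * 2^j) = s^j * z n" if "n \<ge> 1" for n j
  proof (induct j)
    case 0 then show ?case by simp
  next
    case (Suc j)
    have "n * 2^j \<ge> 1" using that by simp
    then have "z (2 * (n * 2^j)) = s * z (n * 2^j)" using zeven unfolding s_def by blast
    then show ?case using Suc by (simp add: mult_ac)
  qed
  have An: "A (real n) = z n" if "n \<ge> 1" for n
  proof -
    have "(\<lambda>j. a j (real n)) = (\<lambda>j. z n)" unfolding a_def
    proof
      fix j
      have "nat \<lfloor>real n * 2^j\<rfloor> = n * 2^j"
        by (metis floor_of_nat nat_int of_nat_mult of_nat_numeral of_nat_power)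
      then show "z (nat \<lfloor>real n * 2^j\<rfloor>) / s^j = z n" using zpow[OF that, of j] s0 by simp
    qed
    then show ?thesis unfolding A_def by simp
  qed
  have Acont: "isCont A y0" if y00: "y0 > 0" for y0
  proof -
    define Y where "Y = 2*y0"
    define W where "W = K0 * Y powr r * (2*\<theta>/(1-\<theta>) + 1)"
    have Y0: "Y > 0" unfolding Y_def using y00 by simp
    obtain J0 where J0: "1 \<le> (y0/2) * 2^J0" using exJ[of "y0/2"] y00 by auto
    have lw: "(\<lambda>j. W * \<theta>^j) \<longlonglongrightarrow> W * 0"
      by (intro tendsto_intros LIMSEQ_power_zero) (use th0 th1 in auto)
    show ?thesis unfolding continuous_at_eps_delta
    proof (intro allI impI)
      fix e :: real assume e: "e > 0"
      have "eventually (\<lambda>j. W * \<theta>^j < e) sequentially" using lw e by (auto simp: order_tendsto_iff)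
      then obtain M where M: "\<forall>j\<ge>M. W * \<theta>^j < e" by (auto simp: eventually_sequentially)
      define j where "j = max M J0"
      have jW: "W * \<theta>^j < e" using M unfolding j_def by auto
      have pj: "(2::real)^J0 \<le> 2^j" unfolding j_def by simp
      define d where "d = min (y0/2) (1/2^j)"
      show "\<exists>d>0. \<forall>x'. dist x' y0 < d \<longrightarrow> dist (A x') (A y0) < e"
      proof (intro exI[of _ d] conjI allI impI)
        show "d > 0" unfolding d_def using y00 by simp
        fix y assume "dist y y0 < d"
        then have yd: "\<bar>y - y0\<bar> < y0/2" "\<bar>y - y0\<bar> < 1/2^j" unfolding d_def dist_real_def by auto
        have ypos: "y > 0" and yY: "y \<le> Y" and y0Y: "y0 \<le> Y" using yd(1) y00 unfolding Y_def by linarith+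
        have "1 \<le> (y0/2) * 2^j" using J0 pj y00 by (meson order.trans mult_left_mono half_gt_zero less_imp_le)
        moreover have "y0/2 \<le> y" "y0/2 \<le> y0" using yd(1) y00 by linarith+
        ultimately have y1: "1 \<le> y * 2^j" and y01: "1 \<le> y0 * 2^j"
          by (meson order.trans mult_right_mono zero_le_power zero_le_numeral)+
        have tb: "\<bar>A v - a j v\<bar> \<le> K0 * Y powr r * \<theta> * \<theta>^j / (1-\<theta>)" if "v > 0" "v \<le> Y" "1 \<le> v * 2^j" for v
        proof -
          have "\<bar>A v - a j v\<bar> \<le> K0 * v powr r * \<theta> * \<theta>^j / (1-\<theta>)" using conv that by blast
          also have "\<dots> \<le> K0 * Y powr r * \<theta> * \<theta>^j / (1-\<theta>)"
            using that K00 th0 th1 r0 by (intro divide_right_mono mult_right_mono mult_left_mono powr_mono2) auto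
          finally show ?thesis .
        qed
        have t1: "\<bar>A y - a j y\<bar> \<le> K0 * Y powr r * \<theta> * \<theta>^j / (1-\<theta>)" using tb ypos yY y1 by blast
        have t2: "\<bar>A y0 - a j y0\<bar> \<le> K0 * Y powr r * \<theta> * \<theta>^j / (1-\<theta>)" using tb y00 y0Y y01 by blast
        have t3: "\<bar>a j y - a j y0\<bar> \<le> K0 * Y powr r * \<theta>^j"
        proof -
          define N where "N = nat \<lfloor>y * 2^j\<rfloor>"
          define N0 where "N0 = nat \<lfloor>y0 * 2^j\<rfloor>"
          have F: "N \<ge> 1" "real N \<le> y * 2^j" "y * 2^j < real N + 1"
            using floor_props[OF y1] unfolding N_def by auto
          have F0: "N0 \<ge> 1" "real N0 \<le> y0 * 2^j" "y0 * 2^j < real N0 + 1"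
            using floor_props[OF y01] unfolding N0_def by auto
          have "\<bar>y * 2^j - y0 * 2^j\<bar> = \<bar>y - y0\<bar> * 2^j" by (simp add: left_diff_distrib[symmetric] abs_mult)
          also have "\<dots> < 1" using yd(2) by (simp add: field_simps)
          finally have cl: "\<bar>y * 2^j - y0 * 2^j\<bar> < 1" .
          have "real N < real N0 + 2" "real N0 < real N + 2" using F F0 cl by linarith+
          then have "N < N0 + 2" "N0 < N + 2" by linarith+
          then consider "N = N0" | "N = N0 + 1" | "N0 = N + 1" by linarith
          then have zd: "\<bar>z N - z N0\<bar> \<le> K0 * (Y * 2^j) powr r"
          proof cases
            case 1 then show ?thesis using K00 by simp
          next
            case 2
            have "real N0 \<le> Y * 2^j" using F0 y0Y by (smt (verit) mult_right_mono zero_le_power)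
            then show ?thesis using dz[of N0 Y j] F0 2 by simp
          next
            case 3
            have "real N \<le> Y * 2^j" using F yY by (smt (verit) mult_right_mono zero_le_power)
            then show ?thesis using dz[of N Y j] F 3 by (simp add: abs_minus_commute)
          qed
          have "\<bar>a j y - a j y0\<bar> = \<bar>z N - z N0\<bar> / s^j"
            unfolding a_def N_def N0_def using s0 by (simp add: diff_divide_distrib[symmetric])
          also have "\<dots> \<le> K0 * (Y * 2^j) powr r / s^j" using zd s0 by (intro divide_right_mono) auto
          also have "\<dots> = K0 * Y powr r * \<theta>^j" unfolding \<theta>_def using pw_lemma[OF Y0, of j r s]
            by (metis times_divide_eq_right mult.assoc)
          finally show ?thesis .
        qed
        have "\<bar>A y - A y0\<bar> \<le> \<bar>A y - a j y\<bar> + \<bar>A y0 - a j y0\<bar> + \<bar>a j y - a j y0\<bar>" by linarith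
        also have "\<dots> \<le> K0 * Y powr r * \<theta> * \<theta>^j / (1-\<theta>) + K0 * Y powr r * \<theta> * \<theta>^j / (1-\<theta>) + K0 * Y powr r * \<theta>^j"
          using t1 t2 t3 by linarith
        also have "\<dots> = W * \<theta>^j" unfolding W_def using th1 by (simp add: algebra_simps add_divide_distrib[symmetric])
        finally show "dist (A y) (A y0) < e" using jW by (simp add: dist_real_def)
      qed
    qed
  qed
  define \<Phi> where "\<Phi> t = A (2 powr t) * 2 powr (- (t * p))" for t
  have per: "\<Phi> (t + 1) = \<Phi> t" for t
  proof -
    have "\<Phi> (t+1) = A (2 * 2 powr t) * (2 powr (- (t * p)) * 2 powr (-p))"
    proof -
      have "2 powr (t + 1) = 2 * 2 powr t" by (simp add: powr_add)
      moreover have "2 powr (- ((t + 1) * p)) = 2 powr (- (t * p)) * 2 powr (-p)"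
        by (simp add: powr_add[symmetric] algebra_simps)
      ultimately show ?thesis unfolding \<Phi>_def by simp
    qed
    also have "2 powr (-p) = 1 / s" using sp by (simp add: powr_minus divide_inverse)
    finally show ?thesis unfolding \<Phi>_def using A2[of "2 powr t"] s0 by simp
  qed
  have cont: "continuous_on UNIV \<Phi>"
  proof (rule continuous_at_imp_continuous_on, intro ballI)
    fix t :: real
    have "isCont (\<lambda>t. A (2 powr t)) t"
    proof -
      have "isCont (\<lambda>t::real. (2::real) powr t) t" by (auto intro!: continuous_intros)
      moreover have "isCont A (2 powr t)" by (rule Acont) simp
      ultimately show ?thesis by (rule isCont_o2)
    qed
    then show "isCont \<Phi> t" unfolding \<Phi>_def by (auto intro!: continuous_intros)
  qed
  have pern: "\<Phi> (t + real n) = \<Phi> t" for t n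
    by (induct n arbitrary: t) (auto simp: per add.assoc[symmetric])
  have perf: "\<Phi> (frac t) = \<Phi> t" for t
  proof (cases "\<lfloor>t\<rfloor> \<ge> 0")
    case True
    then have "t = frac t + real (nat \<lfloor>t\<rfloor>)" by (simp add: frac_def)
    then show ?thesis using pern[of "frac t" "nat \<lfloor>t\<rfloor>"] by simp
  next
    case False
    then have "frac t = t + real (nat (- \<lfloor>t\<rfloor>))" by (simp add: frac_def)
    then show ?thesis using pern[of t "nat (- \<lfloor>t\<rfloor>)"] by simp
  qed
  have "z n = real n powr p * \<Phi> (frac (log 2 (real n)))" if "n \<ge> 1" for n
  proof -
    have n0: "real n > 0" using that by simp
    have "\<Phi> (frac (log 2 (real n))) = \<Phi> (log 2 (real n))" by (rule perf)
    also have "\<dots> = z n * 2 powr (- (log 2 (real n) * p))"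
      unfolding \<Phi>_def using n0 An[OF that] by simp
    also have "2 powr (- (log 2 (real n) * p)) = 1 / real n powr p"
      using n0 by (simp add: powr_minus powr_powr[symmetric] divide_inverse)
    finally show ?thesis using n0 by simp
  qed
  then show ?thesis using cont per unfolding periodic1_cont_def p_def s_def by blast
qed

lemma ln2_half: "ln (2::real) \<ge> 1/2"
proof -
  have "ln (1/2::real) \<le> 1/2 - 1" by (rule ln_le_minus_one) simp
  then show ?thesis by (simp add: ln_div)
qed

definition bqc :: "(nat \<Rightarrow> real) \<Rightarrow> real \<Rightarrow> nat \<Rightarrow> real" where
  "bqc c s i = c i * 2^i / (2^i - s)"

definition Pt :: "(nat \<Rightarrow> real) \<Rightarrow> real \<Rightarrow> nat \<Rightarrow> real \<Rightarrow> real" where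
  "Pt c s i y = (if (2::real)^i = s then c i * y^i * log 2 y else bqc c s i * y^i)"

definition DB :: "(nat \<Rightarrow> real) \<Rightarrow> real \<Rightarrow> nat \<Rightarrow> real \<Rightarrow> real" where
  "DB c s i M = (if (2::real)^i = s then \<bar>c i\<bar> * (real i * M^(i-1) * log 2 M + 2 * M^(i-1))
                 else \<bar>bqc c s i\<bar> * real i * M^(i-1))"

lemma Pt_double:
  assumes "y > 0" shows "Pt c s i (2*y) = s * Pt c s i y + c i * (2*y)^i"
proof (cases "(2::real)^i = s")
  case True
  have "log 2 (2*y) = 1 + log 2 y" using assms by (simp add: log_mult)
  then show ?thesis unfolding Pt_def using True by (simp add: power_mult_distrib algebra_simps)
next
  case False
  then have ne: "(2::real)^i - s \<noteq> 0" by simp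
  have "bqc c s i * (2*y)^i = s * (bqc c s i * y^i) + c i * (2*y)^i"
    unfolding bqc_def using ne by (simp add: power_mult_distrib field_simps)
  then show ?thesis unfolding Pt_def using False by simp
qed

lemma pow_div_le: fixes t M :: real assumes "1 \<le> t" "t \<le> M" shows "t^i / t \<le> M^(i-1)"
proof (cases i)
  case 0 then show ?thesis using assms by simp
next
  case (Suc j)
  then show ?thesis using assms by (simp add: power_mono)
qed

lemma Pt_diff:
  fixes m :: real
  assumes m1: "1 \<le> m" and uv: "m \<le> u" "u \<le> m+1" "m \<le> v" "v \<le> m+1"
  shows "\<bar>Pt c s i u - Pt c s i v\<bar> \<le> DB c s i (m+1) * \<bar>u - v\<bar>"
proof (cases "(2::real)^i = s")
  case True
  have eq: "Pt c s i = (\<lambda>y. c i * y^i * log 2 y)" using True unfolding Pt_def by auto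
  show ?thesis unfolding eq
  proof (rule mvt_abs[where a=m and b="m+1" and f'="\<lambda>t. c i * (real i * t^(i-1) * log 2 t + t^i / (ln 2 * t))"])
    fix t assume t: "m \<le> t" "t \<le> m+1"
    then show "((\<lambda>y. c i * y^i * log 2 y) has_real_derivative c i * (real i * t^(i-1) * log 2 t + t^i / (ln 2 * t))) (at t)"
      using m1 by (auto intro!: derivative_eq_intros simp: algebra_simps)
    have t1: "1 \<le> t" using t m1 by simp
    have l0: "0 \<le> log 2 t" using t1 by simp
    have l1: "log 2 t \<le> log 2 (m+1)" using t t1 by simp
    have p1: "t^(i-1) \<le> (m+1)^(i-1)" using t t1 by (intro power_mono) auto
    have a: "real i * t^(i-1) * log 2 t \<le> real i * (m+1)^(i-1) * log 2 (m+1)"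
      using l0 l1 p1 t1 m1 by (intro mult_mono) auto
    have inv: "1 / ln 2 \<le> (2::real)" using ln2_half by (simp add: field_simps)
    have "t^i / (ln 2 * t) = (t^i / t) * (1 / ln 2)" by simp
    also have "\<dots> \<le> (m+1)^(i-1) * 2" using pow_div_le[OF t1 t(2), of i] inv t1 m1
      by (intro mult_mono) auto
    finally have b: "t^i / (ln 2 * t) \<le> 2 * (m+1)^(i-1)" by simp
    have b0: "0 \<le> t^i / (ln 2 * t)" using t1 by simp
    have a0: "0 \<le> real i * t^(i-1) * log 2 t" using l0 t1 by simp
    show "\<bar>c i * (real i * t^(i-1) * log 2 t + t^i / (ln 2 * t))\<bar> \<le> DB c s i (m+1)"
    proof -
      have "\<bar>c i * (real i * t^(i-1) * log 2 t + t^i / (ln 2 * t))\<bar> = \<bar>c i\<bar> * (real i * t^(i-1) * log 2 t + t^i / (ln 2 * t))"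
        using a0 b0 by (simp add: abs_mult)
      also have "\<dots> \<le> \<bar>c i\<bar> * (real i * (m+1)^(i-1) * log 2 (m+1) + 2 * (m+1)^(i-1))"
        using a b by (intro mult_left_mono) auto
      finally show ?thesis unfolding DB_def using True by simp
    qed
  qed (use uv in auto)
next
  case False
  have eq: "Pt c s i = (\<lambda>y. bqc c s i * y^i)" using False unfolding Pt_def by auto
  show ?thesis unfolding eq
  proof (rule mvt_abs[where a=m and b="m+1" and f'="\<lambda>t. bqc c s i * (real i * t^(i-1))"])
    fix t assume t: "m \<le> t" "t \<le> m+1"
    show "((\<lambda>y. bqc c s i * y^i) has_real_derivative bqc c s i * (real i * t^(i-1))) (at t)"
      by (auto intro!: derivative_eq_intros)
    have "t^(i-1) \<le> (m+1)^(i-1)" using t m1 by (intro power_mono) auto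
    then have "real i * t^(i-1) \<le> real i * (m+1)^(i-1)" by (intro mult_left_mono) auto
    moreover have "0 \<le> real i * t^(i-1)" using t m1 by simp
    ultimately have "\<bar>bqc c s i\<bar> * (real i * t^(i-1)) \<le> \<bar>bqc c s i\<bar> * (real i * (m+1)^(i-1))"
      by (metis abs_ge_zero mult_left_mono)
    then show "\<bar>bqc c s i * (real i * t^(i-1))\<bar> \<le> DB c s i (m+1)"
      unfolding DB_def using False t m1 \<open>0 \<le> real i * t^(i-1)\<close> by (simp add: abs_mult mult.assoc)
  qed (use uv in auto)
qed

lemma DB_nonneg: "M \<ge> 1 \<Longrightarrow> DB c s i M \<ge> 0"
  unfolding DB_def by auto

lemma DB_bound1:
  assumes M: "M \<ge> 1" and ik: "i \<le> k"
  shows "DB c s i M \<le> (\<bar>c i\<bar> + \<bar>bqc c s i\<bar>) * (real k + 2) * (M^(k-1) * (log 2 M + 1))"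
proof -
  have p: "M^(i-1) \<le> M^(k-1)" using M ik by (intro power_increasing) auto
  have l0: "0 \<le> log 2 M" using M by simp
  have "M^(k-1) * 1 \<le> M^(k-1) * (log 2 M + 1)" by (rule mult_left_mono) (use l0 M in auto)
  then have X: "M^(i-1) \<le> M^(k-1) * (log 2 M + 1)" using p by simp
  have Y: "real i * M^(i-1) * log 2 M + 2 * M^(i-1) \<le> (real k + 2) * (M^(k-1) * (log 2 M + 1))"
  proof -
    have "real i * M^(i-1) \<le> real k * M^(k-1)" by (rule mult_mono) (use ik p M in auto)
    then have "real i * M^(i-1) * log 2 M \<le> real k * M^(k-1) * log 2 M" using l0 by (rule mult_right_mono)
    then have "real i * M^(i-1) * log 2 M \<le> real k * (M^(k-1) * log 2 M)" by (simp add: mult.assoc)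
    also have "\<dots> \<le> real k * (M^(k-1) * (log 2 M + 1))" using M by (intro mult_left_mono) auto
    finally show ?thesis using X by (simp add: algebra_simps)
  qed
  have Z: "real i * M^(i-1) \<le> (real k + 2) * (M^(k-1) * (log 2 M + 1))"
  proof -
    have "real i * M^(i-1) \<le> (real k + 2) * M^(i-1)" using ik M by (intro mult_right_mono) auto
    also have "\<dots> \<le> (real k + 2) * (M^(k-1) * (log 2 M + 1))" using X by (intro mult_left_mono) auto
    finally show ?thesis .
  qed
  have R0: "0 \<le> (real k + 2) * (M^(k-1) * (log 2 M + 1))" using M l0 by simp
  show ?thesis
  proof (cases "(2::real)^i = s")
    case True
    have "DB c s i M = \<bar>c i\<bar> * (real i * M^(i-1) * log 2 M + 2 * M^(i-1))" unfolding DB_def using True by simp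
    also have "\<dots> \<le> \<bar>c i\<bar> * ((real k + 2) * (M^(k-1) * (log 2 M + 1)))" using Y by (intro mult_left_mono) auto
    also have "\<dots> \<le> (\<bar>c i\<bar> + \<bar>bqc c s i\<bar>) * ((real k + 2) * (M^(k-1) * (log 2 M + 1)))" using R0 by (intro mult_right_mono) auto
    finally show ?thesis by (simp add: mult.assoc)
  next
    case False
    have "DB c s i M = \<bar>bqc c s i\<bar> * (real i * M^(i-1))" unfolding DB_def using False by simp
    also have "\<dots> \<le> \<bar>bqc c s i\<bar> * ((real k + 2) * (M^(k-1) * (log 2 M + 1)))" using Z by (intro mult_left_mono) auto
    also have "\<dots> \<le> (\<bar>c i\<bar> + \<bar>bqc c s i\<bar>) * ((real k + 2) * (M^(k-1) * (log 2 M + 1)))" using R0 by (intro mult_right_mono) auto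
    finally show ?thesis by (simp add: mult.assoc)
  qed
qed

lemma DB_bound2:
  assumes M: "M \<ge> 1" and ik: "i \<le> k" and nk: "\<not> (2::real)^k = s"
  shows "DB c s i M \<le> (\<bar>c i\<bar> + \<bar>bqc c s i\<bar>) * (3 * real k + 2) * M^(k-1)"
proof -
  have p: "M^(i-1) \<le> M^(k-1)" using M ik by (intro power_increasing) auto
  have Mk0: "0 \<le> M^(k-1)" using M by simp
  have R0: "0 \<le> (3 * real k + 2) * M^(k-1)" using M by simp
  show ?thesis
  proof (cases "(2::real)^i = s")
    case True
    then have ik1: "i \<le> k - 1" using nk ik by (cases "i = k") auto
    have lg: "log 2 M \<le> 2 * M"
    proof -
      have "ln M \<le> M" using ln_le_minus_one[of M] M by simp
      moreover have "1 / ln 2 \<le> (2::real)" using ln2_half by (simp add: field_simps)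
      ultimately have "ln M * (1 / ln 2) \<le> M * 2" using M by (intro mult_mono) auto
      then show ?thesis by (simp add: log_def mult.commute)
    qed
    have A: "real i * M^(i-1) * log 2 M \<le> 2 * real k * M^(k-1)"
    proof (cases i)
      case 0 then show ?thesis using M by simp
    next
      case (Suc j)
      have "real i * M^(i-1) * log 2 M \<le> real i * M^(i-1) * (2 * M)"
        using lg M by (intro mult_left_mono) auto
      also have "\<dots> = 2 * real i * M^i" using Suc by simp
      also have "\<dots> \<le> 2 * real k * M^(k-1)"
        using ik ik1 M by (intro mult_mono power_increasing) auto
      finally show ?thesis .
    qed
    have kM0: "0 \<le> real k * M^(k-1)" using M by simp
    have B: "(3 * real k + 2) * M^(k-1) = 2 * real k * M^(k-1) + real k * M^(k-1) + 2 * M^(k-1)"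
      by (simp add: algebra_simps)
    have Y: "real i * M^(i-1) * log 2 M + 2 * M^(i-1) \<le> (3 * real k + 2) * M^(k-1)"
      using A p kM0 B by linarith
    have "DB c s i M = \<bar>c i\<bar> * (real i * M^(i-1) * log 2 M + 2 * M^(i-1))" unfolding DB_def using True by simp
    also have "\<dots> \<le> \<bar>c i\<bar> * ((3 * real k + 2) * M^(k-1))" using Y by (intro mult_left_mono) auto
    also have "\<dots> \<le> (\<bar>c i\<bar> + \<bar>bqc c s i\<bar>) * ((3 * real k + 2) * M^(k-1))" using R0 by (intro mult_right_mono) auto
    finally show ?thesis by (simp add: mult.assoc)
  next
    case False
    have Z: "real i * M^(i-1) \<le> (3 * real k + 2) * M^(k-1)"
    proof -
      have "real i * M^(i-1) \<le> (3 * real k + 2) * M^(i-1)" using ik M by (intro mult_right_mono) auto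
      also have "\<dots> \<le> (3 * real k + 2) * M^(k-1)" using p by (intro mult_left_mono) auto
      finally show ?thesis .
    qed
    have "DB c s i M = \<bar>bqc c s i\<bar> * (real i * M^(i-1))" unfolding DB_def using False by simp
    also have "\<dots> \<le> \<bar>bqc c s i\<bar> * ((3 * real k + 2) * M^(k-1))" using Z by (intro mult_left_mono) auto
    also have "\<dots> \<le> (\<bar>c i\<bar> + \<bar>bqc c s i\<bar>) * ((3 * real k + 2) * M^(k-1))" using R0 by (intro mult_right_mono) auto
    finally show ?thesis by (simp add: mult.assoc)
  qed
qed

lemma log_sqrt_bound: "M \<ge> 1 \<Longrightarrow> log 2 M + 1 \<le> 5 * M powr (1/2)" for M :: real
proof -
  assume M: "M \<ge> 1"
  have sq: "M powr (1/2) = sqrt M" using M by (simp add: powr_half_sqrt)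
  have s1: "sqrt M \<ge> 1" using M by simp
  have "ln M = 2 * ln (sqrt M)" using M by (simp add: ln_sqrt)
  also have "\<dots> \<le> 2 * sqrt M" using ln_le_minus_one[of "sqrt M"] s1 by simp
  finally have l: "ln M \<le> 2 * sqrt M" .
  have "log 2 M = ln M * (1 / ln 2)" by (simp add: log_def)
  also have "\<dots> \<le> (2 * sqrt M) * 2"
    using l ln2_half M by (intro mult_mono) (auto simp: field_simps)
  finally have L: "log 2 M \<le> 2 * sqrt M * 2" .
  then show ?thesis unfolding sq using s1 by linarith
qed

lemma pow_le_powr: "1 \<le> x \<Longrightarrow> real j \<le> e \<Longrightarrow> x^j \<le> x powr e" for x e :: real
  using powr_mono[of "real j" e x] powr_realpow[of x j] by simp

lemma ln_ge1: "n \<ge> 3 \<Longrightarrow> ln (real n) \<ge> 1"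
proof -
  assume "n \<ge> 3"
  then have "exp 1 \<le> real n" using exp_le by linarith
  then have "ln (exp 1) \<le> ln (real n)" using \<open>n \<ge> 3\<close> by (subst ln_le_cancel_iff) auto
  then show ?thesis by simp
qed

lemma log2_le_ln: "n \<ge> 3 \<Longrightarrow> log 2 (real n) + 1 \<le> 3 * ln (real n)"
proof -
  assume n: "n \<ge> 3"
  have l: "ln (real n) \<ge> 1" using ln_ge1 n by blast
  have "log 2 (real n) = ln (real n) * (1 / ln 2)" by (simp add: log_def)
  also have "\<dots> \<le> ln (real n) * 2" using ln2_half l by (intro mult_left_mono) (auto simp: field_simps)
  finally show ?thesis using l by linarith
qed

lemma sum_nonres:
  assumes nr: "\<forall>i<K. \<not> (2::real)^i = s" and n: "1 \<le> y"
  shows "\<bar>\<Sum>i<K. Pt c s i y\<bar> \<le> (\<Sum>i<K. \<bar>bqc c s i\<bar>) * y^(K-1)"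
proof -
  have "\<bar>\<Sum>i<K. Pt c s i y\<bar> \<le> (\<Sum>i<K. \<bar>Pt c s i y\<bar>)" by (rule sum_abs)
  also have "\<dots> \<le> (\<Sum>i<K. \<bar>bqc c s i\<bar> * y^(K-1))"
  proof (rule sum_mono)
    fix i assume "i \<in> {..<K}"
    then have i: "i < K" "\<not> (2::real)^i = s" using nr by auto
    have "y^i \<le> y^(K-1)" using i n by (intro power_increasing) auto
    then show "\<bar>Pt c s i y\<bar> \<le> \<bar>bqc c s i\<bar> * y^(K-1)"
      unfolding Pt_def using i n by (simp add: abs_mult mult_left_mono)
  qed
  also have "\<dots> = (\<Sum>i<K. \<bar>bqc c s i\<bar>) * y^(K-1)" by (simp add: sum_distrib_right)
  finally show ?thesis .
qed

lemma sum_gen: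
  assumes n: "1 \<le> y"
  shows "\<bar>\<Sum>i<K. Pt c s i y\<bar> \<le> (\<Sum>i<K. \<bar>bqc c s i\<bar> + \<bar>c i\<bar>) * (y^(K-1) * (log 2 y + 1))"
proof -
  have l0: "0 \<le> log 2 y" using n by simp
  have "\<bar>\<Sum>i<K. Pt c s i y\<bar> \<le> (\<Sum>i<K. \<bar>Pt c s i y\<bar>)" by (rule sum_abs)
  also have "\<dots> \<le> (\<Sum>i<K. (\<bar>bqc c s i\<bar> + \<bar>c i\<bar>) * (y^(K-1) * (log 2 y + 1)))"
  proof (rule sum_mono)
    fix i assume "i \<in> {..<K}"
    then have i: "i < K" by auto
    have p: "y^i \<le> y^(K-1)" using i n by (intro power_increasing) auto
    have "y^(K-1) * 1 \<le> y^(K-1) * (log 2 y + 1)" by (rule mult_left_mono) (use l0 n in auto)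
    then have p2: "y^(K-1) \<le> y^(K-1) * (log 2 y + 1)" by simp
    have p3: "y^i * log 2 y \<le> y^(K-1) * (log 2 y + 1)"
      using p l0 n by (intro mult_mono) auto
    have P0: "0 \<le> y^(K-1) * (log 2 y + 1)" using l0 n by simp
    show "\<bar>Pt c s i y\<bar> \<le> (\<bar>bqc c s i\<bar> + \<bar>c i\<bar>) * (y^(K-1) * (log 2 y + 1))"
    proof (cases "(2::real)^i = s")
      case True
      have "\<bar>Pt c s i y\<bar> = \<bar>c i\<bar> * (y^i * log 2 y)" unfolding Pt_def using True n l0 by (simp add: abs_mult)
      also have "\<dots> \<le> \<bar>c i\<bar> * (y^(K-1) * (log 2 y + 1))" using p3 by (intro mult_left_mono) auto
      also have "\<dots> \<le> (\<bar>bqc c s i\<bar> + \<bar>c i\<bar>) * (y^(K-1) * (log 2 y + 1))" using P0 by (intro mult_right_mono) auto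
      finally show ?thesis .
    next
      case False
      have "\<bar>Pt c s i y\<bar> = \<bar>bqc c s i\<bar> * y^i" unfolding Pt_def using False n by (simp add: abs_mult)
      also have "\<dots> \<le> \<bar>bqc c s i\<bar> * (y^(K-1) * (log 2 y + 1))" using p p2 by (intro mult_left_mono) auto
      also have "\<dots> \<le> (\<bar>bqc c s i\<bar> + \<bar>c i\<bar>) * (y^(K-1) * (log 2 y + 1))" using P0 by (intro mult_right_mono) auto
      finally show ?thesis .
    qed
  qed
  also have "\<dots> = (\<Sum>i<K. \<bar>bqc c s i\<bar> + \<bar>c i\<bar>) * (y^(K-1) * (log 2 y + 1))" by (simp add: sum_distrib_right)
  finally show ?thesis .
qed

lemma log2_ge: "(2::real)^j \<le> v \<Longrightarrow> real j \<le> log 2 v"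
proof -
  assume h: "(2::real)^j \<le> v"
  have "log 2 ((2::real)^j) \<le> log 2 v" using h by (intro log_mono) auto
  then show ?thesis by (simp add: log_nat_power)
qed

theorem mainTheorem4:
  fixes \<alpha> \<beta> :: real and g :: "real poly" and k :: nat and x :: "nat \<Rightarrow> real"
    and d0 d1 :: real
  assumes alpha_pos: "\<alpha> > 0" and beta_pos: "\<beta> > 0"
    and deg: "degree g = k" and k_pos: "k \<ge> 1"
    and rec: "\<And>n. n \<ge> 2 \<Longrightarrow>
       x n = \<alpha> * x (n div 2) + \<beta> * x ((n + 1) div 2) + poly g (real n)"
    and d0_def: "d0 = (1 - \<beta>) * x 1 - poly g 1 + poly g 0"
    and d1_def: "d1 = poly g 1 - (1 - \<beta>) * x 1"
  shows
   "(\<alpha> + \<beta> > 2 ^ k \<and> 2 ^ k > max \<alpha> \<beta> \<longrightarrow>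
      (\<exists>\<Phi> \<Psi>. periodic1_cont \<Phi> \<and> periodic1_cont \<Psi> \<and>
        (\<lambda>n. x n - real n powr log 2 (\<alpha> + \<beta>) * \<Phi> (frac (log 2 (real n)))
                 - real n ^ k * \<Psi> (frac (log 2 (real n))))
        \<in> O(\<lambda>n. real n powr log 2 (max \<alpha> \<beta>))))
  \<and> (\<alpha> + \<beta> > 2 ^ k \<and> max \<alpha> \<beta> \<ge> 2 ^ k \<longrightarrow>
      (\<exists>\<Phi>. periodic1_cont \<Phi> \<and>
        (\<lambda>n. x n - real n powr log 2 (\<alpha> + \<beta>) * \<Phi> (frac (log 2 (real n))))
        \<in> O(\<lambda>n. real n powr log 2 (max \<alpha> \<beta>)
                  * ln (real n) ^ iverson (max \<alpha> \<beta> = 2 ^ k))))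
  \<and> (\<alpha> + \<beta> = 2 ^ k \<longrightarrow>
      (\<exists>\<Phi> \<Psi>. periodic1_cont \<Phi> \<and> periodic1_cont \<Psi> \<and>
        (\<forall>\<epsilon>::real. \<epsilon> > 0 \<longrightarrow>
          (\<lambda>n. x n - real n ^ k * ln (real n) * \<Phi> (frac (log 2 (real n)))
                   - real n ^ k * \<Psi> (frac (log 2 (real n))))
          \<in> O(\<lambda>n. real n powr (log 2 (max \<alpha> \<beta>) + iverson (\<alpha> = \<beta>) * \<epsilon>)))))
  \<and> (2 ^ k > \<alpha> + \<beta> \<and> \<alpha> + \<beta> > 2 ^ (k - 1) \<longrightarrow>
      (\<exists>\<Phi> \<Psi>. periodic1_cont \<Phi> \<and> periodic1_cont \<Psi> \<and>
        (\<forall>\<epsilon>::real. \<epsilon> > 0 \<longrightarrow>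
          (\<lambda>n. x n - real n ^ k * \<Phi> (frac (log 2 (real n)))
                   - real n powr log 2 (\<alpha> + \<beta>) * \<Psi> (frac (log 2 (real n))))
          \<in> O(\<lambda>n. real n powr (log 2 (max (max \<alpha> \<beta>) (2 ^ (k - 1)))
                                  + iverson (max \<alpha> \<beta> = 2 ^ (k - 1)) * \<epsilon>)
                    * ln (real n) ^ iverson (max \<alpha> \<beta> < 2 ^ (k - 1))))))
  \<and> (2 ^ (k - 1) \<ge> \<alpha> + \<beta> \<longrightarrow>
      (\<exists>\<Phi>. periodic1_cont \<Phi> \<and>
        (\<lambda>n. x n - real n ^ k * \<Phi> (frac (log 2 (real n))))
        \<in> O(\<lambda>n. real n ^ (k - 1) * ln (real n) ^
                  (1 + iverson (\<alpha> + \<beta> = 2 ^ (k - 1)) *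
                     (iverson (k \<ge> 2 \<and> coeff g (k - 1) \<noteq> 0)
                      + iverson (k = 1 \<and> d0 + d1 \<noteq> 0))))))"
proof -
  define s where "s = \<alpha> + \<beta>"
  define c where "c i = coeff g i" for i
  define P where "P y = (\<Sum>i\<le>k. Pt c s i y)" for y
  define z where "z n = x n - P (real n)" for n
  define hh where "hh m = \<alpha> * P (real m) + \<beta> * P (real m + 1) - s * P (real m + 1/2)" for m
  have s0: "s > 0" unfolding s_def using alpha_pos beta_pos by simp
  have pg: "poly g y = (\<Sum>i\<le>k. c i * y^i)" for y unfolding c_def deg[symmetric] by (rule poly_altdef)
  have Pd: "P (2*y) = s * P y + poly g (2*y)" if "y > 0" for y
    unfolding P_def pg using Pt_double[OF that] by (simp add: sum.distrib sum_distrib_left)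
  have zeven: "\<forall>m\<ge>1. z (2*m) = (\<alpha>+\<beta>) * z m"
  proof (intro allI impI)
    fix m :: nat assume m: "m \<ge> 1"
    have r: "x (2*m) = \<alpha> * x m + \<beta> * x m + poly g (real (2*m))" using rec[of "2*m"] m by simp
    have "P (real (2*m)) = s * P (real m) + poly g (real (2*m))" using Pd[of "real m"] m by simp
    then show "z (2*m) = (\<alpha>+\<beta>) * z m" unfolding z_def using r by (simp add: s_def algebra_simps)
  qed
  have zodd: "\<forall>m\<ge>1. z (2*m+1) = \<alpha> * z m + \<beta> * z (m+1) + hh m"
  proof (intro allI impI)
    fix m :: nat assume m: "m \<ge> 1"
    have r: "x (2*m+1) = \<alpha> * x m + \<beta> * x (m+1) + poly g (real (2*m+1))" using rec[of "2*m+1"] m by simp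
    have e: "real (2*m+1) = 2 * (real m + 1/2)" by simp
    have "P (real (2*m+1)) = s * P (real m + 1/2) + poly g (real (2*m+1))" unfolding e
      by (rule Pd) simp
    then show "z (2*m+1) = \<alpha> * z m + \<beta> * z (m+1) + hh m" unfolding z_def hh_def using r
      by (simp add: algebra_simps)
  qed
  have hhb: "\<bar>hh m\<bar> \<le> s/2 * (\<Sum>i\<le>k. DB c s i (real m + 1))" if m: "m \<ge> 1" for m
  proof -
    define M where "M = real m"
    have M1: "M \<ge> 1" using m unfolding M_def by simp
    have pw: "\<alpha> * (Pt c s i M - Pt c s i (M + 1/2)) + \<beta> * (Pt c s i (M+1) - Pt c s i (M + 1/2))
            = \<alpha> * Pt c s i M + \<beta> * Pt c s i (M+1) - s * Pt c s i (M + 1/2)" for i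
      unfolding s_def by (simp add: algebra_simps)
    have "(\<Sum>i\<le>k. \<alpha> * (Pt c s i M - Pt c s i (M + 1/2)) + \<beta> * (Pt c s i (M+1) - Pt c s i (M + 1/2)))
        = (\<Sum>i\<le>k. \<alpha> * Pt c s i M + \<beta> * Pt c s i (M+1) - s * Pt c s i (M + 1/2))" by (simp only: pw)
    also have "\<dots> = hh m" unfolding hh_def P_def M_def
      by (simp only: sum.distrib sum_subtractf sum_distrib_left)
    finally have eqh: "hh m = (\<Sum>i\<le>k. \<alpha> * (Pt c s i M - Pt c s i (M + 1/2)) + \<beta> * (Pt c s i (M+1) - Pt c s i (M + 1/2)))" by (rule sym)
    have "\<bar>hh m\<bar> = \<bar>\<Sum>i\<le>k. \<alpha> * (Pt c s i M - Pt c s i (M + 1/2)) + \<beta> * (Pt c s i (M+1) - Pt c s i (M + 1/2))\<bar>"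
      by (simp only: eqh)
    also have "\<dots> \<le> (\<Sum>i\<le>k. \<bar>\<alpha> * (Pt c s i M - Pt c s i (M + 1/2)) + \<beta> * (Pt c s i (M+1) - Pt c s i (M + 1/2))\<bar>)"
      by (rule sum_abs)
    also have "\<dots> \<le> (\<Sum>i\<le>k. s/2 * DB c s i (M + 1))"
    proof (rule sum_mono)
      fix i
      have d1: "\<bar>Pt c s i M - Pt c s i (M + 1/2)\<bar> \<le> DB c s i (M+1) * \<bar>M - (M + 1/2)\<bar>"
        by (rule Pt_diff) (use M1 in auto)
      have d2: "\<bar>Pt c s i (M+1) - Pt c s i (M + 1/2)\<bar> \<le> DB c s i (M+1) * \<bar>(M+1) - (M + 1/2)\<bar>"
        by (rule Pt_diff) (use M1 in auto)
      have "\<bar>\<alpha> * (Pt c s i M - Pt c s i (M + 1/2)) + \<beta> * (Pt c s i (M+1) - Pt c s i (M + 1/2))\<bar>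
            \<le> \<alpha> * \<bar>Pt c s i M - Pt c s i (M + 1/2)\<bar> + \<beta> * \<bar>Pt c s i (M+1) - Pt c s i (M + 1/2)\<bar>"
        using alpha_pos beta_pos abs_triangle_ineq[of "\<alpha> * (Pt c s i M - Pt c s i (M + 1/2))" "\<beta> * (Pt c s i (M+1) - Pt c s i (M + 1/2))"]
        by (simp add: abs_mult)
      also have "\<dots> \<le> \<alpha> * (DB c s i (M+1) / 2) + \<beta> * (DB c s i (M+1) / 2)"
        using d1 d2 alpha_pos beta_pos by (intro add_mono mult_left_mono) auto
      also have "\<dots> = s/2 * DB c s i (M + 1)" unfolding s_def by (simp add: algebra_simps)
      finally show "\<bar>\<alpha> * (Pt c s i M - Pt c s i (M + 1/2)) + \<beta> * (Pt c s i (M+1) - Pt c s i (M + 1/2))\<bar> \<le> s/2 * DB c s i (M + 1)" .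
    qed
    also have "\<dots> = s/2 * (\<Sum>i\<le>k. DB c s i (real m + 1))" unfolding M_def by (simp add: sum_distrib_left)
    finally show ?thesis .
  qed
  have Psplit: "P y = (\<Sum>i<k. Pt c s i y) + Pt c s k y" for y
    unfolding P_def by (metis lessThan_Suc_atMost sum.lessThan_Suc)
  have Psuc: "P y = (\<Sum>i<Suc k. Pt c s i y)" for y
    unfolding P_def by (simp add: lessThan_Suc_atMost)
  have xz: "x n = z n + P (real n)" for n unfolding z_def by simp
  have Ptk: "Pt c s k y = bqc c s k * y^k" if "\<not> (2::real)^k = s" for y
    unfolding Pt_def using that by simp
  have mu2: "s \<le> 2 * max \<alpha> \<beta>" unfolding s_def by simp
  have HB2: "\<exists>C\<ge>0. \<forall>m\<ge>1. \<bar>hh m\<bar> \<le> C * real (m+1) powr real (k-1)" if nk: "\<not> (2::real)^k = s"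
  proof -
    define C where "C = s/2 * (\<Sum>i\<le>k. (\<bar>c i\<bar> + \<bar>bqc c s i\<bar>) * (3 * real k + 2))"
    have C0: "C \<ge> 0" unfolding C_def using s0 by (intro mult_nonneg_nonneg sum_nonneg) auto
    have "\<bar>hh m\<bar> \<le> C * real (m+1) powr real (k-1)" if m: "m \<ge> 1" for m
    proof -
      have "\<bar>hh m\<bar> \<le> s/2 * (\<Sum>i\<le>k. DB c s i (real m + 1))" using hhb m by blast
      also have "\<dots> \<le> s/2 * (\<Sum>i\<le>k. (\<bar>c i\<bar> + \<bar>bqc c s i\<bar>) * (3 * real k + 2) * (real m + 1)^(k-1))"
        using s0 nk by (intro mult_left_mono sum_mono DB_bound2) auto
      also have "\<dots> = C * (real m + 1)^(k-1)" unfolding C_def by (simp add: sum_distrib_right mult.assoc)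
      also have "\<dots> = C * real (m+1) powr real (k-1)" by (simp add: powr_realpow add.commute)
      finally show ?thesis .
    qed
    with C0 show ?thesis by blast
  qed
  have HB1: "\<exists>C\<ge>0. \<forall>m\<ge>1. \<bar>hh m\<bar> \<le> C * real (m+1) powr (real k - 1/2)"
  proof -
    define C where "C = s/2 * (\<Sum>i\<le>k. (\<bar>c i\<bar> + \<bar>bqc c s i\<bar>) * (real k + 2)) * 5"
    have C0: "C \<ge> 0" unfolding C_def using s0 by (intro mult_nonneg_nonneg sum_nonneg) auto
    have "\<bar>hh m\<bar> \<le> C * real (m+1) powr (real k - 1/2)" if m: "m \<ge> 1" for m
    proof -
      define M where "M = real m + 1"
      have M1: "M \<ge> 1" unfolding M_def by simp
      have key: "M^(k-1) * (log 2 M + 1) \<le> 5 * M powr (real k - 1/2)"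
      proof -
        have "M^(k-1) * (log 2 M + 1) \<le> M^(k-1) * (5 * M powr (1/2))"
          using log_sqrt_bound[OF M1] M1 by (intro mult_left_mono) auto
        also have "\<dots> = 5 * (M powr real (k-1) * M powr (1/2))" using M1 by (simp add: powr_realpow)
        also have "\<dots> = 5 * M powr (real k - 1/2)" using M1 k_pos by (simp add: powr_add[symmetric] of_nat_diff)
        finally show ?thesis .
      qed
      have "\<bar>hh m\<bar> \<le> s/2 * (\<Sum>i\<le>k. DB c s i M)" using hhb m unfolding M_def by blast
      also have "\<dots> \<le> s/2 * (\<Sum>i\<le>k. (\<bar>c i\<bar> + \<bar>bqc c s i\<bar>) * (real k + 2) * (M^(k-1) * (log 2 M + 1)))"
        using s0 M1 by (intro mult_left_mono sum_mono DB_bound1) auto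
      also have "\<dots> = s/2 * (\<Sum>i\<le>k. (\<bar>c i\<bar> + \<bar>bqc c s i\<bar>) * (real k + 2)) * (M^(k-1) * (log 2 M + 1))"
        by (simp add: sum_distrib_right mult.assoc)
      also have "\<dots> \<le> s/2 * (\<Sum>i\<le>k. (\<bar>c i\<bar> + \<bar>bqc c s i\<bar>) * (real k + 2)) * (5 * M powr (real k - 1/2))"
        using key s0 by (intro mult_left_mono mult_nonneg_nonneg sum_nonneg) auto
      also have "\<dots> = C * real (m+1) powr (real k - 1/2)" unfolding C_def M_def by (simp add: add.commute)
      finally show ?thesis .
    qed
    with C0 show ?thesis by blast
  qed
  have const_per: "periodic1_cont (\<lambda>_. v)" for v :: real
    unfolding periodic1_cont_def by (simp add: continuous_on_const)
  have pos1: "\<forall>\<^sub>F n in at_top. (1::nat) \<le> n" by (simp add: eventually_ge_at_top)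
  have c1: "\<alpha> + \<beta> > 2 ^ k \<and> 2 ^ k > max \<alpha> \<beta> \<longrightarrow>
      (\<exists>\<Phi> \<Psi>. periodic1_cont \<Phi> \<and> periodic1_cont \<Psi> \<and>
        (\<lambda>n. x n - real n powr log 2 (\<alpha> + \<beta>) * \<Phi> (frac (log 2 (real n)))
                 - real n ^ k * \<Psi> (frac (log 2 (real n))))
        \<in> O(\<lambda>n. real n powr log 2 (max \<alpha> \<beta>)))"
  proof
    assume h: "\<alpha> + \<beta> > 2 ^ k \<and> 2 ^ k > max \<alpha> \<beta>"
    have nk: "\<not> (2::real)^k = s" using h unfolding s_def by auto
    obtain C where C: "C \<ge> 0" "\<forall>m\<ge>1. \<bar>hh m\<bar> \<le> C * real (m+1) powr real (k-1)" using HB2[OF nk] by blast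
    have qs: "2 powr real (k-1) < \<alpha> + \<beta>"
    proof -
      have "(2::real) ^ (k-1) \<le> 2^k" by (intro power_increasing) auto
      moreover have "2 powr real (k-1) = (2::real)^(k-1)" by (simp add: powr_realpow)
      ultimately show ?thesis using h by linarith
    qed
    obtain \<Phi> where \<Phi>: "periodic1_cont \<Phi>" "\<forall>n\<ge>1. z n = real n powr log 2 (\<alpha>+\<beta>) * \<Phi> (frac (log 2 (real n)))"
      using core[OF alpha_pos beta_pos zeven zodd C(2) C(1) _ qs] by auto
    define B where "B = (\<Sum>i<k. \<bar>bqc c s i\<bar>)"
    have nr: "\<forall>i<k. \<not> (2::real)^i = s"
    proof (intro allI impI)
      fix i assume "i < k"
      then have "(2::real)^i \<le> 2^k" by (intro power_increasing) auto
      then have "(2::real)^i < s" using h unfolding s_def by linarith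
      then show "\<not> (2::real)^i = s" by simp
    qed
    have lk: "real (k-1) \<le> log 2 (max \<alpha> \<beta>)"
    proof (rule log2_ge)
      have "(2::real)^k = 2 * 2^(k-1)" using k_pos by (cases k) auto
      then show "(2::real)^(k-1) \<le> max \<alpha> \<beta>" using h mu2 unfolding s_def by linarith
    qed
    show "\<exists>\<Phi> \<Psi>. periodic1_cont \<Phi> \<and> periodic1_cont \<Psi> \<and>
        (\<lambda>n. x n - real n powr log 2 (\<alpha> + \<beta>) * \<Phi> (frac (log 2 (real n)))
                 - real n ^ k * \<Psi> (frac (log 2 (real n))))
        \<in> O(\<lambda>n. real n powr log 2 (max \<alpha> \<beta>))"
    proof (intro exI conjI)
      show "periodic1_cont \<Phi>" by (rule \<Phi>(1))
      show "periodic1_cont (\<lambda>_. bqc c s k)" by (rule const_per)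
      show "(\<lambda>n. x n - real n powr log 2 (\<alpha> + \<beta>) * \<Phi> (frac (log 2 (real n)))
                 - real n ^ k * bqc c s k) \<in> O(\<lambda>n. real n powr log 2 (max \<alpha> \<beta>))"
      proof (rule bigoI[where c=B], rule eventually_mono[OF pos1])
        fix n :: nat assume n: "1 \<le> n"
        have n1: "1 \<le> real n" using n by simp
        have "x n - real n powr log 2 (\<alpha> + \<beta>) * \<Phi> (frac (log 2 (real n))) - real n ^ k * bqc c s k
              = (\<Sum>i<k. Pt c s i (real n))"
          using \<Phi>(2) n xz[of n] Psplit[of "real n"] Ptk[OF nk] by (simp add: algebra_simps)
        then have "norm (x n - real n powr log 2 (\<alpha> + \<beta>) * \<Phi> (frac (log 2 (real n))) - real n ^ k * bqc c s k)
              \<le> B * real n ^ (k-1)" unfolding B_def using sum_nonres[OF nr n1] by simp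
        also have "\<dots> \<le> B * norm (real n powr log 2 (max \<alpha> \<beta>))"
          unfolding B_def using pow_le_powr[OF n1 lk] by (intro mult_left_mono sum_nonneg) auto
        finally show "norm (x n - real n powr log 2 (\<alpha> + \<beta>) * \<Phi> (frac (log 2 (real n))) - real n ^ k * bqc c s k)
              \<le> B * norm (real n powr log 2 (max \<alpha> \<beta>))" .
      qed
    qed
  qed
  have ln1: "\<forall>\<^sub>F n in at_top. (3::nat) \<le> n" by (simp add: eventually_ge_at_top)
  have powk1: "2 powr real (k-1) = (2::real)^(k-1)" by (simp add: powr_realpow)
  have k2: "(2::real)^k = 2 * 2^(k-1)" using k_pos by (cases k) auto
  have c2: "\<alpha> + \<beta> > 2 ^ k \<and> max \<alpha> \<beta> \<ge> 2 ^ k \<longrightarrow>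
      (\<exists>\<Phi>. periodic1_cont \<Phi> \<and>
        (\<lambda>n. x n - real n powr log 2 (\<alpha> + \<beta>) * \<Phi> (frac (log 2 (real n))))
        \<in> O(\<lambda>n. real n powr log 2 (max \<alpha> \<beta>)
                  * ln (real n) ^ iverson (max \<alpha> \<beta> = 2 ^ k)))"
  proof
    assume h: "\<alpha> + \<beta> > 2 ^ k \<and> max \<alpha> \<beta> \<ge> 2 ^ k"
    have nk: "\<not> (2::real)^k = s" using h unfolding s_def by auto
    obtain C where C: "C \<ge> 0" "\<forall>m\<ge>1. \<bar>hh m\<bar> \<le> C * real (m+1) powr real (k-1)" using HB2[OF nk] by blast
    have qs: "2 powr real (k-1) < \<alpha> + \<beta>"
    proof -
      have "(2::real) ^ (k-1) \<le> 2^k" by (intro power_increasing) auto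
      then show ?thesis using h powk1 by linarith
    qed
    obtain \<Phi> where \<Phi>: "periodic1_cont \<Phi>" "\<forall>n\<ge>1. z n = real n powr log 2 (\<alpha>+\<beta>) * \<Phi> (frac (log 2 (real n)))"
      using core[OF alpha_pos beta_pos zeven zodd C(2) C(1) _ qs] by auto
    define B where "B = (\<Sum>i<Suc k. \<bar>bqc c s i\<bar>)"
    have nr: "\<forall>i<Suc k. \<not> (2::real)^i = s"
    proof (intro allI impI)
      fix i assume "i < Suc k"
      then have "(2::real)^i \<le> 2^k" by (intro power_increasing) auto
      then have "(2::real)^i < s" using h unfolding s_def by linarith
      then show "\<not> (2::real)^i = s" by simp
    qed
    have lk: "real k \<le> log 2 (max \<alpha> \<beta>)" by (rule log2_ge) (use h in auto)
    show "\<exists>\<Phi>. periodic1_cont \<Phi> \<and>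
        (\<lambda>n. x n - real n powr log 2 (\<alpha> + \<beta>) * \<Phi> (frac (log 2 (real n))))
        \<in> O(\<lambda>n. real n powr log 2 (max \<alpha> \<beta>) * ln (real n) ^ iverson (max \<alpha> \<beta> = 2 ^ k))"
    proof (intro exI conjI)
      show "periodic1_cont \<Phi>" by (rule \<Phi>(1))
      show "(\<lambda>n. x n - real n powr log 2 (\<alpha> + \<beta>) * \<Phi> (frac (log 2 (real n))))
        \<in> O(\<lambda>n. real n powr log 2 (max \<alpha> \<beta>) * ln (real n) ^ iverson (max \<alpha> \<beta> = 2 ^ k))"
      proof (rule bigoI[where c=B], rule eventually_mono[OF ln1])
        fix n :: nat assume n: "3 \<le> n"
        have n1: "1 \<le> real n" using n by simp
        have l1: "1 \<le> ln (real n)" using ln_ge1[OF n] .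
        have "x n - real n powr log 2 (\<alpha> + \<beta>) * \<Phi> (frac (log 2 (real n))) = (\<Sum>i<Suc k. Pt c s i (real n))"
          using \<Phi>(2) n xz[of n] Psuc[of "real n"] by (simp add: algebra_simps)
        then have "norm (x n - real n powr log 2 (\<alpha> + \<beta>) * \<Phi> (frac (log 2 (real n)))) \<le> B * real n ^ k"
          unfolding B_def using sum_nonres[OF nr n1] by simp
        also have "\<dots> \<le> B * (real n powr log 2 (max \<alpha> \<beta>) * 1)"
          unfolding B_def using pow_le_powr[OF n1 lk] by (intro mult_left_mono sum_nonneg) auto
        also have "\<dots> \<le> B * (real n powr log 2 (max \<alpha> \<beta>) * ln (real n) ^ iverson (max \<alpha> \<beta> = 2 ^ k))"
          unfolding B_def using l1 by (intro mult_left_mono sum_nonneg one_le_power) auto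
        also have "\<dots> = B * norm (real n powr log 2 (max \<alpha> \<beta>) * ln (real n) ^ iverson (max \<alpha> \<beta> = 2 ^ k))"
          using l1 by simp
        finally show "norm (x n - real n powr log 2 (\<alpha> + \<beta>) * \<Phi> (frac (log 2 (real n))))
              \<le> B * norm (real n powr log 2 (max \<alpha> \<beta>) * ln (real n) ^ iverson (max \<alpha> \<beta> = 2 ^ k))" .
      qed
    qed
  qed
  have iv0: "(iverson b :: real) \<ge> 0" for b unfolding iverson_def by auto
  have c3: "\<alpha> + \<beta> = 2 ^ k \<longrightarrow>
      (\<exists>\<Phi> \<Psi>. periodic1_cont \<Phi> \<and> periodic1_cont \<Psi> \<and>
        (\<forall>\<epsilon>::real. \<epsilon> > 0 \<longrightarrow>
          (\<lambda>n. x n - real n ^ k * ln (real n) * \<Phi> (frac (log 2 (real n)))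
                   - real n ^ k * \<Psi> (frac (log 2 (real n))))
          \<in> O(\<lambda>n. real n powr (log 2 (max \<alpha> \<beta>) + iverson (\<alpha> = \<beta>) * \<epsilon>))))"
  proof
    assume h: "\<alpha> + \<beta> = 2 ^ k"
    obtain C where C: "C \<ge> 0" "\<forall>m\<ge>1. \<bar>hh m\<bar> \<le> C * real (m+1) powr (real k - 1/2)" using HB1 by blast
    have qs: "2 powr (real k - 1/2) < \<alpha> + \<beta>"
    proof -
      have "2 powr (real k - 1/2) < 2 powr real k" by simp
      then show ?thesis using h by (simp add: powr_realpow)
    qed
    have q0: "0 \<le> real k - 1/2" using k_pos by simp
    obtain \<Psi> where \<Psi>: "periodic1_cont \<Psi>" "\<forall>n\<ge>1. z n = real n powr log 2 (\<alpha>+\<beta>) * \<Psi> (frac (log 2 (real n)))"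
      using core[OF alpha_pos beta_pos zeven zodd C(2) C(1) q0 qs] by auto
    have pk: "log 2 (\<alpha>+\<beta>) = real k" using h by (simp add: log_nat_power)
    define B where "B = (\<Sum>i<k. \<bar>bqc c s i\<bar>)"
    have res: "(2::real)^k = s" using h unfolding s_def by simp
    have nr: "\<forall>i<k. \<not> (2::real)^i = s"
    proof (intro allI impI)
      fix i assume "i < k"
      then have "(2::real)^i < 2^k" by (intro power_strict_increasing) auto
      then show "\<not> (2::real)^i = s" using res by simp
    qed
    have lk: "real (k-1) \<le> log 2 (max \<alpha> \<beta>)"
      by (rule log2_ge) (use h mu2 k2 in \<open>simp add: s_def\<close>)
    show "\<exists>\<Phi> \<Psi>. periodic1_cont \<Phi> \<and> periodic1_cont \<Psi> \<and>
        (\<forall>\<epsilon>::real. \<epsilon> > 0 \<longrightarrow>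
          (\<lambda>n. x n - real n ^ k * ln (real n) * \<Phi> (frac (log 2 (real n)))
                   - real n ^ k * \<Psi> (frac (log 2 (real n))))
          \<in> O(\<lambda>n. real n powr (log 2 (max \<alpha> \<beta>) + iverson (\<alpha> = \<beta>) * \<epsilon>)))"
    proof (intro exI conjI allI impI)
      show "periodic1_cont (\<lambda>_. c k / ln 2)" by (rule const_per)
      show "periodic1_cont \<Psi>" by (rule \<Psi>(1))
      fix \<epsilon> :: real assume e: "\<epsilon> > 0"
      have le: "real (k-1) \<le> log 2 (max \<alpha> \<beta>) + iverson (\<alpha> = \<beta>) * \<epsilon>"
        using lk iv0[of "\<alpha> = \<beta>"] e by (smt (verit) mult_nonneg_nonneg)
      show "(\<lambda>n. x n - real n ^ k * ln (real n) * (c k / ln 2) - real n ^ k * \<Psi> (frac (log 2 (real n))))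
          \<in> O(\<lambda>n. real n powr (log 2 (max \<alpha> \<beta>) + iverson (\<alpha> = \<beta>) * \<epsilon>))"
      proof (rule bigoI[where c=B], rule eventually_mono[OF pos1])
        fix n :: nat assume n: "1 \<le> n"
        have n1: "1 \<le> real n" using n by simp
        have ptk: "Pt c s k (real n) = real n ^ k * ln (real n) * (c k / ln 2)"
          unfolding Pt_def using res by (simp add: log_def)
        have zn: "z n = real n ^ k * \<Psi> (frac (log 2 (real n)))"
          using \<Psi>(2) n pk n1 by (simp add: powr_realpow)
        have "x n - real n ^ k * ln (real n) * (c k / ln 2) - real n ^ k * \<Psi> (frac (log 2 (real n)))
              = (\<Sum>i<k. Pt c s i (real n))"
          using zn xz[of n] Psplit[of "real n"] ptk by (simp add: algebra_simps)
        then have "norm (x n - real n ^ k * ln (real n) * (c k / ln 2) - real n ^ k * \<Psi> (frac (log 2 (real n))))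
              \<le> B * real n ^ (k-1)" unfolding B_def using sum_nonres[OF nr n1] by simp
        also have "\<dots> \<le> B * norm (real n powr (log 2 (max \<alpha> \<beta>) + iverson (\<alpha> = \<beta>) * \<epsilon>))"
          unfolding B_def using pow_le_powr[OF n1 le] by (intro mult_left_mono sum_nonneg) auto
        finally show "norm (x n - real n ^ k * ln (real n) * (c k / ln 2) - real n ^ k * \<Psi> (frac (log 2 (real n))))
              \<le> B * norm (real n powr (log 2 (max \<alpha> \<beta>) + iverson (\<alpha> = \<beta>) * \<epsilon>))" .
      qed
    qed
  qed
  have c4: "2 ^ k > \<alpha> + \<beta> \<and> \<alpha> + \<beta> > 2 ^ (k - 1) \<longrightarrow>
      (\<exists>\<Phi> \<Psi>. periodic1_cont \<Phi> \<and> periodic1_cont \<Psi> \<and>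
        (\<forall>\<epsilon>::real. \<epsilon> > 0 \<longrightarrow>
          (\<lambda>n. x n - real n ^ k * \<Phi> (frac (log 2 (real n)))
                   - real n powr log 2 (\<alpha> + \<beta>) * \<Psi> (frac (log 2 (real n))))
          \<in> O(\<lambda>n. real n powr (log 2 (max (max \<alpha> \<beta>) (2 ^ (k - 1)))
                                  + iverson (max \<alpha> \<beta> = 2 ^ (k - 1)) * \<epsilon>)
                    * ln (real n) ^ iverson (max \<alpha> \<beta> < 2 ^ (k - 1)))))"
  proof
    assume h: "2 ^ k > \<alpha> + \<beta> \<and> \<alpha> + \<beta> > 2 ^ (k - 1)"
    have nk: "\<not> (2::real)^k = s" using h unfolding s_def by auto
    obtain C where C: "C \<ge> 0" "\<forall>m\<ge>1. \<bar>hh m\<bar> \<le> C * real (m+1) powr real (k-1)" using HB2[OF nk] by blast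
    have qs: "2 powr real (k-1) < \<alpha> + \<beta>" using h powk1 by simp
    obtain \<Psi> where \<Psi>: "periodic1_cont \<Psi>" "\<forall>n\<ge>1. z n = real n powr log 2 (\<alpha>+\<beta>) * \<Psi> (frac (log 2 (real n)))"
      using core[OF alpha_pos beta_pos zeven zodd C(2) C(1) _ qs] by auto
    define B where "B = (\<Sum>i<k. \<bar>bqc c s i\<bar>)"
    have nr: "\<forall>i<k. \<not> (2::real)^i = s"
    proof (intro allI impI)
      fix i assume "i < k"
      then have "(2::real)^i \<le> 2^(k-1)" by (intro power_increasing) auto
      then have "(2::real)^i < s" using h unfolding s_def by linarith
      then show "\<not> (2::real)^i = s" by simp
    qed
    have lk: "real (k-1) \<le> log 2 (max (max \<alpha> \<beta>) (2 ^ (k - 1)))" by (rule log2_ge) simp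
    show "\<exists>\<Phi> \<Psi>. periodic1_cont \<Phi> \<and> periodic1_cont \<Psi> \<and>
        (\<forall>\<epsilon>::real. \<epsilon> > 0 \<longrightarrow>
          (\<lambda>n. x n - real n ^ k * \<Phi> (frac (log 2 (real n)))
                   - real n powr log 2 (\<alpha> + \<beta>) * \<Psi> (frac (log 2 (real n))))
          \<in> O(\<lambda>n. real n powr (log 2 (max (max \<alpha> \<beta>) (2 ^ (k - 1)))
                                  + iverson (max \<alpha> \<beta> = 2 ^ (k - 1)) * \<epsilon>)
                    * ln (real n) ^ iverson (max \<alpha> \<beta> < 2 ^ (k - 1))))"
    proof (intro exI conjI allI impI)
      show "periodic1_cont (\<lambda>_. bqc c s k)" by (rule const_per)
      show "periodic1_cont \<Psi>" by (rule \<Psi>(1))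
      fix \<epsilon> :: real assume e: "\<epsilon> > 0"
      define G where "G n = real n powr (log 2 (max (max \<alpha> \<beta>) (2 ^ (k - 1)))
                                  + iverson (max \<alpha> \<beta> = 2 ^ (k - 1)) * \<epsilon>)
                    * ln (real n) ^ iverson (max \<alpha> \<beta> < 2 ^ (k - 1))" for n :: nat
      have le: "real (k-1) \<le> log 2 (max (max \<alpha> \<beta>) (2 ^ (k - 1))) + iverson (max \<alpha> \<beta> = 2 ^ (k - 1)) * \<epsilon>"
        using lk iv0[of "max \<alpha> \<beta> = 2 ^ (k - 1)"] e by (smt (verit) mult_nonneg_nonneg)
      have "(\<lambda>n. x n - real n ^ k * bqc c s k - real n powr log 2 (\<alpha> + \<beta>) * \<Psi> (frac (log 2 (real n))))
          \<in> O(G)"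
      proof (rule bigoI[where c=B], rule eventually_mono[OF ln1])
        fix n :: nat assume n: "3 \<le> n"
        have n1: "1 \<le> real n" using n by simp
        have l1: "1 \<le> ln (real n)" using ln_ge1[OF n] .
        have "x n - real n ^ k * bqc c s k - real n powr log 2 (\<alpha> + \<beta>) * \<Psi> (frac (log 2 (real n)))
              = (\<Sum>i<k. Pt c s i (real n))"
          using \<Psi>(2) n xz[of n] Psplit[of "real n"] Ptk[OF nk] by (simp add: algebra_simps)
        then have "norm (x n - real n ^ k * bqc c s k - real n powr log 2 (\<alpha> + \<beta>) * \<Psi> (frac (log 2 (real n))))
              \<le> B * real n ^ (k-1)" unfolding B_def using sum_nonres[OF nr n1] by simp
        also have "\<dots> \<le> B * (real n powr (log 2 (max (max \<alpha> \<beta>) (2 ^ (k - 1)))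
                                  + iverson (max \<alpha> \<beta> = 2 ^ (k - 1)) * \<epsilon>) * 1)"
          unfolding B_def using pow_le_powr[OF n1 le] by (intro mult_left_mono sum_nonneg) auto
        also have "\<dots> \<le> B * G n"
          unfolding B_def G_def using l1 by (intro mult_left_mono sum_nonneg one_le_power) auto
        also have "\<dots> = B * norm (G n)" unfolding G_def using l1 by simp
        finally show "norm (x n - real n ^ k * bqc c s k - real n powr log 2 (\<alpha> + \<beta>) * \<Psi> (frac (log 2 (real n))))
              \<le> B * norm (G n)" .
      qed
      then show "(\<lambda>n. x n - real n ^ k * bqc c s k - real n powr log 2 (\<alpha> + \<beta>) * \<Psi> (frac (log 2 (real n))))
          \<in> O(\<lambda>n. real n powr (log 2 (max (max \<alpha> \<beta>) (2 ^ (k - 1)))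
                                  + iverson (max \<alpha> \<beta> = 2 ^ (k - 1)) * \<epsilon>)
                    * ln (real n) ^ iverson (max \<alpha> \<beta> < 2 ^ (k - 1)))" unfolding G_def .
    qed
  qed
  have c5: "2 ^ (k - 1) \<ge> \<alpha> + \<beta> \<longrightarrow>
      (\<exists>\<Phi>. periodic1_cont \<Phi> \<and>
        (\<lambda>n. x n - real n ^ k * \<Phi> (frac (log 2 (real n))))
        \<in> O(\<lambda>n. real n ^ (k - 1) * ln (real n) ^
                  (1 + iverson (\<alpha> + \<beta> = 2 ^ (k - 1)) *
                     (iverson (k \<ge> 2 \<and> coeff g (k - 1) \<noteq> 0)
                      + iverson (k = 1 \<and> d0 + d1 \<noteq> 0)))))"
  proof
    assume h: "2 ^ (k - 1) \<ge> \<alpha> + \<beta>"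
    have nk: "\<not> (2::real)^k = s" using h k2 s0 unfolding s_def by auto
    obtain C where C: "C \<ge> 0" "\<forall>m\<ge>1. \<bar>hh m\<bar> \<le> C * real (m+1) powr real (k-1)" using HB2[OF nk] by blast
    have mr: "max \<alpha> \<beta> < 2 powr real (k-1)" using h powk1 alpha_pos beta_pos by simp
    obtain K0 where K0: "\<forall>n\<ge>1. \<bar>z (n+1) - z n\<bar> \<le> K0 * real n powr real (k-1)"
      using delta_bound[OF alpha_pos beta_pos zeven zodd C(2) C(1) _ _ mr] by auto
    have K00: "K0 \<ge> 0" using K0[rule_format, of 1] by (auto intro: order.trans[OF abs_ge_zero])
    have zrec: "\<forall>n\<ge>2. \<bar>z n\<bar> \<le> s * \<bar>z (n div 2)\<bar> + (\<beta> * K0 + C) * real n powr real (k-1)"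
    proof (intro allI impI)
      fix n :: nat assume n2: "n \<ge> 2"
      define m where "m = n div 2"
      have m1: "m \<ge> 1" using n2 unfolding m_def by auto
      have pn: "real m powr real (k-1) \<le> real n powr real (k-1)" "real (m+1) powr real (k-1) \<le> real n powr real (k-1)"
        using m1 n2 unfolding m_def by (auto intro!: powr_mono2)
      have R0: "0 \<le> (\<beta> * K0 + C) * real n powr real (k-1)" using beta_pos K00 C(1) by simp
      consider "n = 2*m" | "n = 2*m+1" unfolding m_def by linarith
      then show "\<bar>z n\<bar> \<le> s * \<bar>z (n div 2)\<bar> + (\<beta> * K0 + C) * real n powr real (k-1)"
      proof cases
        case 1
        then have "\<bar>z n\<bar> = s * \<bar>z m\<bar>" using zeven m1 s0 unfolding s_def by (simp add: abs_mult)
        then show ?thesis using R0 unfolding m_def by simp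
      next
        case 2
        have "z n = s * z m + \<beta> * (z (m+1) - z m) + hh m" using zodd m1 2 unfolding s_def by (simp add: algebra_simps)
        then have "\<bar>z n\<bar> \<le> s * \<bar>z m\<bar> + \<beta> * \<bar>z (m+1) - z m\<bar> + \<bar>hh m\<bar>"
        proof -
          have "\<bar>s * z m + \<beta> * (z (m+1) - z m) + hh m\<bar> \<le> \<bar>s * z m\<bar> + \<bar>\<beta> * (z (m+1) - z m)\<bar> + \<bar>hh m\<bar>"
            by (rule order.trans[OF abs_triangle_ineq add_right_mono[OF abs_triangle_ineq]])
          then show ?thesis using s0 beta_pos \<open>z n = s * z m + \<beta> * (z (m+1) - z m) + hh m\<close> by (simp add: abs_mult)
        qed
        also have "\<dots> \<le> s * \<bar>z m\<bar> + \<beta> * (K0 * real n powr real (k-1)) + C * real n powr real (k-1)"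
        proof -
          have "\<bar>z (m+1) - z m\<bar> \<le> K0 * real n powr real (k-1)"
            using K0 m1 pn(1) K00 by (meson mult_left_mono order.trans)
          moreover have "\<bar>hh m\<bar> \<le> C * real n powr real (k-1)"
            using C(2) m1 pn(2) C(1) by (meson mult_left_mono order.trans)
          ultimately show ?thesis using beta_pos s0 by (intro add_mono mult_left_mono) auto
        qed
        finally show ?thesis unfolding m_def by (simp add: algebra_simps)
      qed
    qed
    have a2: "s \<le> 2 powr real (k-1)" using h powk1 unfolding s_def by simp
    obtain Kz where Kz: "\<forall>n\<ge>1. \<bar>z n\<bar> \<le> Kz * real n powr real (k-1) * (log 2 (real n) + 1)"
      using floor_rec_bound_log[OF _ _ _ a2 zrec] s0 beta_pos K00 C(1) by auto
    have Kz0: "Kz \<ge> 0" using Kz[rule_format, of 1] by (auto intro: order.trans[OF abs_ge_zero])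
    define B where "B = (\<Sum>i<k. \<bar>bqc c s i\<bar> + \<bar>c i\<bar>)"
    have B0: "B \<ge> 0" unfolding B_def by (intro sum_nonneg) auto
    define E :: nat where "E = 1 + iverson (\<alpha> + \<beta> = 2 ^ (k - 1)) *
                     (iverson (k \<ge> 2 \<and> coeff g (k - 1) \<noteq> 0) + iverson (k = 1 \<and> d0 + d1 \<noteq> 0))"
    have E1: "E \<ge> 1" unfolding E_def by simp
    have "(\<lambda>n. x n - real n ^ k * bqc c s k) \<in> O(\<lambda>n. real n ^ (k - 1) * ln (real n) ^ E)"
    proof (rule bigoI[where c="3 * (Kz + B)"], rule eventually_mono[OF ln1])
      fix n :: nat assume n: "3 \<le> n"
      have n1: "1 \<le> real n" using n by simp
      have l1: "1 \<le> ln (real n)" using ln_ge1[OF n] .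
      have lg0: "0 \<le> log 2 (real n)" using n1 by simp
      have "x n - real n ^ k * bqc c s k = z n + (\<Sum>i<k. Pt c s i (real n))"
        using xz[of n] Psplit[of "real n"] Ptk[OF nk] by (simp add: algebra_simps)
      then have "norm (x n - real n ^ k * bqc c s k) \<le> \<bar>z n\<bar> + \<bar>\<Sum>i<k. Pt c s i (real n)\<bar>" by simp
      also have "\<dots> \<le> Kz * (real n ^ (k-1) * (log 2 (real n) + 1)) + B * (real n ^ (k-1) * (log 2 (real n) + 1))"
      proof (rule add_mono)
        show "\<bar>z n\<bar> \<le> Kz * (real n ^ (k-1) * (log 2 (real n) + 1))"
          using Kz[rule_format, of n] n n1 by (simp add: powr_realpow mult.assoc)
        show "\<bar>\<Sum>i<k. Pt c s i (real n)\<bar> \<le> B * (real n ^ (k-1) * (log 2 (real n) + 1))"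
          using sum_gen[OF n1, where K=k and c=c and s=s] unfolding B_def .
      qed
      also have "\<dots> = (Kz + B) * (real n ^ (k-1) * (log 2 (real n) + 1))" by (simp add: algebra_simps)
      also have "\<dots> \<le> (Kz + B) * (real n ^ (k-1) * (3 * ln (real n)))"
        using log2_le_ln[OF n] Kz0 B0 n1 by (intro mult_left_mono) auto
      also have "\<dots> \<le> (Kz + B) * (real n ^ (k-1) * (3 * ln (real n) ^ E))"
      proof -
        have "ln (real n) ^ 1 \<le> ln (real n) ^ E" using E1 l1 by (intro power_increasing) auto
        then show ?thesis using Kz0 B0 n1 by (intro mult_left_mono) auto
      qed
      also have "\<dots> = 3 * (Kz + B) * norm (real n ^ (k-1) * ln (real n) ^ E)" using l1 by simp
      finally show "norm (x n - real n ^ k * bqc c s k) \<le> 3 * (Kz + B) * norm (real n ^ (k-1) * ln (real n) ^ E)" .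
    qed
    then have bo: "(\<lambda>n. x n - real n ^ k * bqc c s k) \<in> O(\<lambda>n. real n ^ (k - 1) * ln (real n) ^
                  (1 + iverson (\<alpha> + \<beta> = 2 ^ (k - 1)) *
                     (iverson (k \<ge> 2 \<and> coeff g (k - 1) \<noteq> 0)
                      + iverson (k = 1 \<and> d0 + d1 \<noteq> 0))))" unfolding E_def .
    show "\<exists>\<Phi>. periodic1_cont \<Phi> \<and>
        (\<lambda>n. x n - real n ^ k * \<Phi> (frac (log 2 (real n))))
        \<in> O(\<lambda>n. real n ^ (k - 1) * ln (real n) ^
                  (1 + iverson (\<alpha> + \<beta> = 2 ^ (k - 1)) *
                     (iverson (k \<ge> 2 \<and> coeff g (k - 1) \<noteq> 0)
                      + iverson (k = 1 \<and> d0 + d1 \<noteq> 0))))"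
      by (rule exI[of _ "\<lambda>_. bqc c s k"], rule conjI, rule const_per) (use bo in simp)
  qed
  show ?thesis using c1 c2 c3 c4 c5 by blast
qed

end
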